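(* Let $L=L_\Delta=\lceil\gamma_{\mathrm{paths}}c_{1,\mathrm{paths}}\log(c_{2,\mathrm{paths}}\Delta^{-1})\rceil$ with constants $\gamma_{\mathrm{paths}}>0$, $c_{2,\mathrm{paths}}>0$, and $c_{1,\mathrm{paths}}>c^*_{\mathrm{paths}}(Q,D):=\frac23+\frac83\sum_{|\mathbf j|_1\le Q}\prod_{d=1}^D(2j_d+1)$, and let $\tau\in\big(0,1-(c^*_{\mathrm{paths}}(Q,D)/c_{1,\mathrm{paths}})^{1/2}\big)$. Then there is $\Delta_0>0$ such that for every $\Delta\le\Delta_0$, $\epsilon_\Delta:=1-\tau/\lambda_{\min,\Delta}\in(0,1-\tau/2]$ and $$2K\exp\Big\{-\frac{3\epsilon_\Delta^2L}{6m_\Delta\lambda_{\max,\Delta}/\lambda_{\min,\Delta}^2+2\epsilon_\Delta(m_\Delta/\lambda_{\min,\Delta}+\lambda_{\max,\Delta}/\lambda_{\min,\Delta})}\Big\}\le\frac{2\binom{D+Q}{D}}{c_{2,\mathrm{paths}}^{\gamma_{\mathrm{paths}}}}\Delta^{\gamma_{\mathrm{paths}}}.$$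
   Context: $b:\mathbb{R}^D\to\mathbb{R}^D$, $\sigma:\mathbb{R}^D\to\mathbb{R}^{D\times D}$ measurable with $\sup_u(|b(u)|_2+\|\sigma(u)\|_2)\le C_{b,\sigma}$. For $\Delta>0$: $h=c_{\mathrm{cube}}\Delta^{\gamma_{\mathrm{cube}}}$ with $c_{\mathrm{cube}}>0$, $0<\gamma_{\mathrm{cube}}<1/2$; $r_2=\sqrt{2\log(c_{2,\mathrm{trunc}}\Delta^{-\gamma_{2,\mathrm{trunc}}}\log(\Delta^{-1}))}$ with $c_{2,\mathrm{trunc}},\gamma_{2,\mathrm{trunc}}>0$; $[x]_r$ is componentwise truncation to $[-r,r]$. Fix $a_0\in\mathbb{R}^D$, let $U_h$ be uniform on $a_0+(-h/2,h/2]^D$, $\xi$ a $D$-dim standard normal vector independent of $U_h$, and $\tilde X_\Delta=U_h+b(U_h)\Delta+\sigma(U_h)\sqrt\Delta[\xi]_{r_2}$. $\mathcal{L}_q$ is the Legendre polynomial of degree $q$ with $\mathcal{L}_q(1)=1$, $p_{\mathbf j}(x)=\prod_d\sqrt{2j_d+1}\mathcal{L}_{j_d}(x_d)$; for fixed $Q\in\mathbb{N}_0$, $\eta_1,\dots,\eta_K$ ($K=\binom{D+Q}{D}$) is a fixed ordering of $x\mapsto p_{\mathbf j}((x-a_0)/(h/2))$, $|\mathbf j|_1\le Q$. $R_\Delta=(E[\eta_k(\tilde X_\Delta)\eta_\kappa(\tilde X_\Delta)])_{k,\kappa}$, $\lambda_{\min,\Delta}=\lambda_{\min}(R_\Delta)$,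 $\lambda_{\max,\Delta}=\lambda_{\max}(R_\Delta)$, $m_\Delta=\sup_{x\in\operatorname{supp}(\tilde X_\Delta)}\sum_{k=1}^K|\eta_k(x)|^2$. *)

theory Defs
  imports "HOL-Probability.Probability"
begin

text \<open>Legendre polynomials, normalised so that legendre q 1 = 1 (Bonnet recursion).\<close>
fun legendre :: "nat \<Rightarrow> real \<Rightarrow> real" where
  "legendre 0 x = 1"
| "legendre (Suc 0) x = x"
| "legendre (Suc (Suc n)) x =
     ((2 * real n + 3) * x * legendre (Suc n) x - (real n + 1) * legendre n x) / (real n + 2)"

definition multi_idx :: "nat \<Rightarrow> ('d::finite \<Rightarrow> nat) set" where
  "multi_idx Q = {j. (\<Sum>d\<in>UNIV. j d) \<le> Q}"

definition p_leg :: "('d::finite \<Rightarrow> nat) \<Rightarrow> real^'d \<Rightarrow> real" where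
  "p_leg j x = (\<Prod>d\<in>UNIV. sqrt (2 * real (j d) + 1) * legendre (j d) (x $ d))"

definition eta :: "real^'d \<Rightarrow> real \<Rightarrow> ('d::finite \<Rightarrow> nat) \<Rightarrow> real^'d \<Rightarrow> real" where
  "eta a0 h j x = p_leg j (\<chi> d. (x $ d - a0 $ d) / (h / 2))"

definition trunc_vec :: "real \<Rightarrow> real^'d \<Rightarrow> real^'d" where
  "trunc_vec r x = (\<chi> d. max (- r) (min r (x $ d)))"

definition cube :: "real^'d \<Rightarrow> real \<Rightarrow> (real^'d) set" where
  "cube a0 h = {x. \<forall>d. a0 $ d - h / 2 < x $ d \<and> x $ d \<le> a0 $ d + h / 2}"

definition std_normal_vec :: "(real^'d::finite) measure" where
  "std_normal_vec = density lborel (\<lambda>x. ennreal (\<Prod>d\<in>UNIV. std_normal_density (x $ d)))"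

definition h_cube :: "real \<Rightarrow> real \<Rightarrow> real \<Rightarrow> real" where
  "h_cube c_cube \<gamma>_cube \<Delta> = c_cube * \<Delta> powr \<gamma>_cube"

definition r2_trunc :: "real \<Rightarrow> real \<Rightarrow> real \<Rightarrow> real" where
  "r2_trunc c2t \<gamma>2t \<Delta> = sqrt (2 * ln (c2t * \<Delta> powr (- \<gamma>2t) * ln (1 / \<Delta>)))"

definition Xlaw ::
  "(real^'d \<Rightarrow> real^'d) \<Rightarrow> (real^'d \<Rightarrow> real^'d^'d) \<Rightarrow> real^'d::finite \<Rightarrow> real \<Rightarrow> real \<Rightarrow> real
     \<Rightarrow> (real^'d) measure" where
  "Xlaw b \<sigma> a0 h r \<Delta> =
     distr (uniform_measure lborel (cube a0 h) \<Otimes>\<^sub>M std_normal_vec) borel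
       (\<lambda>(u, \<xi>). u + \<Delta> *\<^sub>R b u + sqrt \<Delta> *\<^sub>R (\<sigma> u *v trunc_vec r \<xi>))"

definition is_eigenvalue_on :: "'i set \<Rightarrow> ('i \<Rightarrow> 'i \<Rightarrow> real) \<Rightarrow> real \<Rightarrow> bool" where
  "is_eigenvalue_on J A l \<longleftrightarrow>
     (\<exists>v. (\<exists>k\<in>J. v k \<noteq> 0) \<and> (\<forall>k\<in>J. (\<Sum>\<kappa>\<in>J. A k \<kappa> * v \<kappa>) = l * v k))"

definition lambda_min_on :: "'i set \<Rightarrow> ('i \<Rightarrow> 'i \<Rightarrow> real) \<Rightarrow> real" where
  "lambda_min_on J A = Min {l. is_eigenvalue_on J A l}"

definition lambda_max_on :: "'i set \<Rightarrow> ('i \<Rightarrow> 'i \<Rightarrow> real) \<Rightarrow> real" where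
  "lambda_max_on J A = Max {l. is_eigenvalue_on J A l}"

definition supp_measure :: "('a::metric_space) measure \<Rightarrow> 'a set" where
  "supp_measure M = {x. \<forall>e>0. emeasure M (ball x e) > 0}"

text \<open>Gram matrix R_Delta, indexed by multi-indices (ordering irrelevant for spectrum).\<close>
definition gram :: "(real^'d) measure \<Rightarrow> real^'d \<Rightarrow> real \<Rightarrow> ('d::finite \<Rightarrow> nat) \<Rightarrow> ('d \<Rightarrow> nat) \<Rightarrow> real" where
  "gram M a0 h j k = (\<integral>x. eta a0 h j x * eta a0 h k x \<partial>M)"

definition m_sup :: "(real^'d) measure \<Rightarrow> real^'d \<Rightarrow> real \<Rightarrow> nat \<Rightarrow> real" where
  "m_sup M a0 h Q = (SUP x\<in>supp_measure M. \<Sum>j\<in>(multi_idx Q :: ('d::finite \<Rightarrow> nat) set). (eta a0 h j x)\<^sup>2)"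

end

theory Submission
  imports Defs "Jordan_Normal_Form.Spectral_Radius" "HOL-Real_Asymp.Real_Asymp"
begin

no_notation Matrix.vec_index (infixl \<open>$\<close> 100)

fun ld :: "nat \<Rightarrow> real \<Rightarrow> real" where
  "ld 0 x = 0"
| "ld (Suc 0) x = 1"
| "ld (Suc (Suc n)) x =
     ((2 * real n + 3) * (legendre (Suc n) x + x * ld (Suc n) x) - (real n + 1) * ld n x) / (real n + 2)"

fun ldd :: "nat \<Rightarrow> real \<Rightarrow> real" where
  "ldd 0 x = 0"
| "ldd (Suc 0) x = 0"
| "ldd (Suc (Suc n)) x =
     ((2 * real n + 3) * (2 * ld (Suc n) x + x * ldd (Suc n) x) - (real n + 1) * ldd n x) / (real n + 2)"

lemma leg_deriv: "(legendre n has_real_derivative ld n x) (at x)"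
proof (induction n x rule: legendre.induct)
  case (3 n y)
  show ?case unfolding legendre.simps ld.simps
    by (rule DERIV_cdivide) (auto intro!: derivative_eq_intros 3 simp: field_simps)
qed (auto intro!: derivative_eq_intros)

lemma ld_deriv: "(ld n has_real_derivative ldd n x) (at x)"
proof (induction n x rule: legendre.induct)
  case (3 n y)
  show ?case unfolding ld.simps ldd.simps
    by (rule DERIV_cdivide) (auto intro!: derivative_eq_intros 3 leg_deriv simp: field_simps)
qed (auto intro!: derivative_eq_intros)

lemma leg_one: "legendre n 1 = 1"
  by (induction n "1::real" rule: legendre.induct) (auto simp: field_simps)

lemma leg_parity: "legendre n (-x) = (-1)^n * legendre n x"
  by (induction n x rule: legendre.induct) (auto simp: field_simps)

lemma leg_id: "ld (Suc n) x = x * ld n x + (real n + 1) * legendre n x \<and>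
   x * ld (Suc n) x - ld n x = (real n + 1) * legendre (Suc n) x"
proof (induction n)
  case 0 then show ?case by simp
next
  case (Suc n)
  then have A: "ld (Suc n) x = x * ld n x + (real n + 1) * legendre n x"
    and B: "x * ld (Suc n) x - ld n x = (real n + 1) * legendre (Suc n) x" by auto
  have C: "ld n x = x * ld (Suc n) x - (real n + 1) * legendre (Suc n) x" using B by simp
  have 1: "ld (Suc (Suc n)) x = x * ld (Suc n) x + (real (Suc n) + 1) * legendre (Suc n) x"
    unfolding ld.simps C by (simp add: field_simps)
  have 2: "x * ld (Suc (Suc n)) x - ld (Suc n) x = (real (Suc n) + 1) * legendre (Suc (Suc n)) x"
  proof -
    have "x * ld (Suc (Suc n)) x - ld (Suc n) x = x * x * ld (Suc n) x + (real n + 2) * x * legendre (Suc n) x - ld (Suc n) x"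
      using 1 by (simp add: algebra_simps)
    also have "x * x * ld (Suc n) x = x * ld n x + (real n + 1) * x * legendre (Suc n) x"
      using B by (simp add: algebra_simps)
    finally show ?thesis unfolding legendre.simps using A by (simp add: field_simps)
  qed
  show ?case using 1 2 by simp
qed

lemma leg_D2: "(x^2 - 1) * ld (Suc n) x = (real n + 1) * (x * legendre (Suc n) x - legendre n x)"
proof -
  have A: "ld (Suc n) x = x * ld n x + (real n + 1) * legendre n x"
    and B: "x * ld (Suc n) x - ld n x = (real n + 1) * legendre (Suc n) x" using leg_id[of n x] by blast+
  have "(x^2 - 1) * ld (Suc n) x = x * (x * ld (Suc n) x) - ld (Suc n) x" by (simp add: algebra_simps power2_eq_square)
  also have "x * ld (Suc n) x = ld n x + (real n + 1) * legendre (Suc n) x" using B by simp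
  finally show ?thesis using A by (simp add: algebra_simps)
qed

lemma leg_ode: "(1 - x^2) * ldd n x - 2 * x * ld n x + real n * (real n + 1) * legendre n x = 0"
proof (cases n)
  case 0 then show ?thesis by simp
next
  case (Suc k)
  define g where "g = (\<lambda>x. (x^2 - 1) * ld (Suc k) x - (real k + 1) * (x * legendre (Suc k) x - legendre k x))"
  have g0: "g = (\<lambda>_. 0)" unfolding g_def using leg_D2 by auto
  have "(g has_real_derivative (2 * x * ld (Suc k) x + (x^2 - 1) * ldd (Suc k) x
       - (real k + 1) * (legendre (Suc k) x + x * ld (Suc k) x - ld k x))) (at x)"
    unfolding g_def by (auto intro!: derivative_eq_intros leg_deriv ld_deriv)
  moreover have "(g has_real_derivative 0) (at x)" unfolding g0 by simp
  ultimately have E: "2 * x * ld (Suc k) x + (x^2 - 1) * ldd (Suc k) x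
       - (real k + 1) * (legendre (Suc k) x + x * ld (Suc k) x - ld k x) = 0"
    using DERIV_unique by blast
  have B: "x * ld (Suc k) x - ld k x = (real k + 1) * legendre (Suc k) x" using leg_id[of k x] by blast
  have "(real k + 1) * (legendre (Suc k) x + x * ld (Suc k) x - ld k x) = (real k + 1) * (real k + 2) * legendre (Suc k) x"
    using B by (simp add: algebra_simps)
  then show ?thesis using E Suc by (simp add: algebra_simps)
qed

lemma leg_bound_pos:
  assumes "0 \<le> x" "x \<le> 1"
  shows "(legendre n x)^2 \<le> 1"
proof (cases n)
  case 0 then show ?thesis by simp
next
  case (Suc k)
  define c where "c = real n * (real n + 1)"
  have c: "c > 0" using Suc by (simp add: c_def)
  define f where "f = (\<lambda>x. (legendre n x)^2 + (1 - x^2) * (ld n x)^2 / c)"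
  have d: "(f has_real_derivative 2 * t * (ld n t)^2 / c) (at t)" for t
  proof -
    have "(f has_real_derivative 2 * legendre n t * ld n t + ((- 2 * t) * (ld n t)^2 + (1 - t^2) * (2 * ld n t * ldd n t)) / c) (at t)"
      unfolding f_def using c by (auto intro!: derivative_eq_intros leg_deriv ld_deriv simp: field_simps)
    moreover have "2 * legendre n t * ld n t + ((- 2 * t) * (ld n t)^2 + (1 - t^2) * (2 * ld n t * ldd n t)) / c
       = 2 * t * (ld n t)^2 / c"
    proof -
      have o: "(1 - t^2) * ldd n t = 2 * t * ld n t - c * legendre n t" using leg_ode[of t n] by (simp add: c_def algebra_simps)
      have "(1 - t^2) * (2 * ld n t * ldd n t) = 2 * ld n t * ((1 - t^2) * ldd n t)" by simp
      also have "\<dots> = 2 * ld n t * (2 * t * ld n t - c * legendre n t)" using o by simp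
      finally show ?thesis using c by (simp add: field_simps power2_eq_square)
    qed
    ultimately show ?thesis by simp
  qed
  have "f x \<le> f 1"
    by (rule DERIV_nonneg_imp_nondecreasing[of x 1 f]) (use assms d c in \<open>auto intro!: exI\<close>)
  moreover have "f 1 = 1" by (simp add: f_def leg_one)
  moreover have "(legendre n x)^2 \<le> f x" unfolding f_def using assms c
    by (intro add_increasing2 divide_nonneg_pos mult_nonneg_nonneg) (auto simp: power_le_one abs_square_le_1)
  ultimately show ?thesis by simp
qed

lemma leg_bound:
  assumes "\<bar>x\<bar> \<le> 1"
  shows "(legendre n x)^2 \<le> 1"
proof (cases "x \<ge> 0")
  case True then show ?thesis using assms leg_bound_pos by auto
next
  case False
  have "(legendre n x)^2 = (legendre n (-x))^2" by (simp add: leg_parity power_mult_distrib power_mult[symmetric])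
  also have "\<dots> \<le> 1" using assms False by (intro leg_bound_pos) auto
  finally show ?thesis .
qed

lemma leg_cont: "continuous_on S (legendre n)"
  using leg_deriv DERIV_isCont continuous_at_imp_continuous_on by blast

lemma ld_cont: "continuous_on S (ld n)"
  using ld_deriv DERIV_isCont continuous_at_imp_continuous_on by blast

lemma leg_rec: "(real n + 1) * legendre (Suc n) x = (2 * real n + 1) * x * legendre n x - real n * legendre (n - 1) x"
  by (cases n) (auto simp: field_simps)

lemma cont_int: "continuous_on {-1..1::real} (f::real\<Rightarrow>real) \<Longrightarrow> f integrable_on {-1..1}"
  by (simp add: integrable_continuous_interval)

lemma leg_prod_int: "(\<lambda>x. legendre n x * legendre m x) integrable_on {-1..1}"
  by (intro cont_int continuous_intros leg_cont[THEN continuous_on_subset]) auto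

lemma leg_xprod_int: "(\<lambda>x. x * legendre n x * legendre m x) integrable_on {-1..1}"
  by (intro cont_int continuous_intros leg_cont[THEN continuous_on_subset]) auto

lemma leg_orth:
  assumes "n \<noteq> m"
  shows "integral {-1..1} (\<lambda>x. legendre n x * legendre m x) = 0"
proof -
  define c where "c = real m * (real m + 1) - real n * (real n + 1)"
  have c: "c \<noteq> 0"
  proof
    assume "c = 0"
    then have "(real m - real n) * (real m + real n + 1) = 0" by (simp add: c_def algebra_simps)
    then have "real m = real n" by (simp add: add_nonneg_nonneg)
    then show False using assms by simp
  qed
  define W where "W = (\<lambda>x. (1 - x^2) * (ld n x * legendre m x - legendre n x * ld m x))"
  have d: "(W has_real_derivative c * (legendre n x * legendre m x)) (at x)" for x
  proof -
    have "(W has_real_derivative (- 2 * x) * (ld n x * legendre m x - legendre n x * ld m x)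
        + (1 - x^2) * (ldd n x * legendre m x + ld n x * ld m x - (ld n x * ld m x + legendre n x * ldd m x))) (at x)"
      unfolding W_def by (auto intro!: derivative_eq_intros leg_deriv ld_deriv)
    moreover have "(- 2 * x) * (ld n x * legendre m x - legendre n x * ld m x)
        + (1 - x^2) * (ldd n x * legendre m x + ld n x * ld m x - (ld n x * ld m x + legendre n x * ldd m x))
        = c * (legendre n x * legendre m x)"
    proof -
      have A: "(1 - x^2) * ldd n x - 2 * x * ld n x = - (real n * (real n + 1) * legendre n x)"
        using leg_ode[of x n] by simp
      have B: "(1 - x^2) * ldd m x - 2 * x * ld m x = - (real m * (real m + 1) * legendre m x)"
        using leg_ode[of x m] by simp
      have "(- 2 * x) * (ld n x * legendre m x - legendre n x * ld m x)
        + (1 - x^2) * (ldd n x * legendre m x + ld n x * ld m x - (ld n x * ld m x + legendre n x * ldd m x))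
        = legendre m x * ((1 - x^2) * ldd n x - 2 * x * ld n x) - legendre n x * ((1 - x^2) * ldd m x - 2 * x * ld m x)"
        by (simp add: algebra_simps)
      also have "\<dots> = c * (legendre n x * legendre m x)" unfolding A B by (simp add: c_def algebra_simps)
      finally show ?thesis .
    qed
    ultimately show ?thesis by simp
  qed
  have "((\<lambda>x. c * (legendre n x * legendre m x)) has_integral (W 1 - W (-1))) {-1..1}"
    by (rule fundamental_theorem_of_calculus)
       (auto intro!: DERIV_subset[OF d] simp: has_real_derivative_iff_has_vector_derivative[symmetric])
  then have "((\<lambda>x. c * (legendre n x * legendre m x)) has_integral 0) {-1..1}"
    by (simp add: W_def)
  then have "integral {-1..1} (\<lambda>x. c * (legendre n x * legendre m x)) = 0" by (rule integral_unique)
  then show ?thesis using c by simp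
qed

lemma leg_norm: "integral {-1..1} (\<lambda>x. legendre n x * legendre n x) = 2 / (2 * real n + 1)"
proof (induction n)
  case 0 then show ?case by simp
next
  case (Suc n)
  let ?I = "\<lambda>f. integral {-1..1::real} f"
  have e1: "(real n + 1) * ?I (\<lambda>x. legendre (Suc n) x * legendre (Suc n) x)
      = (2 * real n + 1) * ?I (\<lambda>x. x * legendre n x * legendre (Suc n) x)
        - real n * ?I (\<lambda>x. legendre (n - 1) x * legendre (Suc n) x)"
  proof -
    have "(real n + 1) * ?I (\<lambda>x. legendre (Suc n) x * legendre (Suc n) x)
       = ?I (\<lambda>x. ((real n + 1) * legendre (Suc n) x) * legendre (Suc n) x)"
      by (simp add: mult.assoc)
    also have "\<dots> = ?I (\<lambda>x. (2 * real n + 1) * (x * legendre n x * legendre (Suc n) x)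
        - real n * (legendre (n - 1) x * legendre (Suc n) x))"
      unfolding leg_rec by (simp add: algebra_simps)
    also have "\<dots> = (2 * real n + 1) * ?I (\<lambda>x. x * legendre n x * legendre (Suc n) x)
        - real n * ?I (\<lambda>x. legendre (n - 1) x * legendre (Suc n) x)"
      by (subst integral_diff) (auto intro!: cont_int continuous_intros leg_cont[THEN continuous_on_subset])
    finally show ?thesis .
  qed
  have z: "real n * ?I (\<lambda>x. legendre (n - 1) x * legendre (Suc n) x) = 0"
    by (cases n) (auto simp: leg_orth simp del: legendre.simps)
  have e2: "(real (Suc n) + 1) * ?I (\<lambda>x. legendre (Suc (Suc n)) x * legendre n x)
      = (2 * real (Suc n) + 1) * ?I (\<lambda>x. x * legendre (Suc n) x * legendre n x)
        - real (Suc n) * ?I (\<lambda>x. legendre n x * legendre n x)"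
  proof -
    have "(real (Suc n) + 1) * ?I (\<lambda>x. legendre (Suc (Suc n)) x * legendre n x)
       = ?I (\<lambda>x. ((real (Suc n) + 1) * legendre (Suc (Suc n)) x) * legendre n x)"
      by (simp add: mult.assoc)
    also have "\<dots> = ?I (\<lambda>x. (2 * real (Suc n) + 1) * (x * legendre (Suc n) x * legendre n x)
        - real (Suc n) * (legendre n x * legendre n x))"
      unfolding leg_rec by (simp add: algebra_simps)
    also have "\<dots> = (2 * real (Suc n) + 1) * ?I (\<lambda>x. x * legendre (Suc n) x * legendre n x)
        - real (Suc n) * ?I (\<lambda>x. legendre n x * legendre n x)"
      by (subst integral_diff) (auto intro!: cont_int continuous_intros leg_cont[THEN continuous_on_subset])
    finally show ?thesis .
  qed
  have z2: "?I (\<lambda>x. legendre (Suc (Suc n)) x * legendre n x) = 0" by (simp add: leg_orth del: legendre.simps)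
  have sw: "?I (\<lambda>x. x * legendre (Suc n) x * legendre n x) = ?I (\<lambda>x. x * legendre n x * legendre (Suc n) x)"
    by (simp add: algebra_simps)
  define T where "T = ?I (\<lambda>x. x * legendre n x * legendre (Suc n) x)"
  define N where "N = ?I (\<lambda>x. legendre n x * legendre n x)"
  define N1 where "N1 = ?I (\<lambda>x. legendre (Suc n) x * legendre (Suc n) x)"
  have a: "(2 * real n + 3) * T = (real n + 1) * N"
    using e2 z2 sw unfolding T_def[symmetric] N_def[symmetric] by (simp add: algebra_simps del: legendre.simps)
  have b: "(real n + 1) * N1 = (2 * real n + 1) * T"
    using e1 z unfolding T_def[symmetric] N1_def[symmetric] by simp
  have n: "N = 2 / (2 * real n + 1)" using Suc unfolding N_def .
  have t: "T = (real n + 1) / (2 * real n + 3) * N"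
    using a by (simp add: field_simps)
  have "N1 = (2 * real n + 1) / (real n + 1) * T"
    using b by (simp add: field_simps)
  then have "N1 = (2 * real n + 1) / (real n + 1) * ((real n + 1) / (2 * real n + 3) * N)"
    using t by simp
  moreover have "(2 * real n + 1) / (real n + 1) * ((real n + 1) / (2 * real n + 3) * (2 / (2 * real n + 1))) = 2 / (2 * real n + 3)"
    by (simp add: divide_simps)
  ultimately show ?case unfolding N1_def[symmetric] n by (simp add: add.commute)
qed

lemma Basis_vec_real: "(Basis :: (real^'d) set) = range (\<lambda>i. axis i 1)"
  by (auto simp: Basis_vec_def)

lemma inj_axis1: "inj (\<lambda>i. axis i (1::real) :: real^'d)"
  by (auto simp: inj_def axis_eq_axis)

lemma prod_Basis_vec: "(\<Prod>b\<in>(Basis :: (real^'d) set). g b) = (\<Prod>i\<in>UNIV. g (axis i (1::real)))"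
  unfolding Basis_vec_real by (subst prod.reindex[OF inj_axis1]) simp

lemma sum_Basis_vec_nth: "(\<Sum>b\<in>(Basis :: (real^'d) set). c b *\<^sub>R b) $ i = c (axis i 1)"
proof -
  have "(\<Sum>b\<in>(Basis :: (real^'d) set). c b *\<^sub>R b) $ i = (\<Sum>j\<in>UNIV. c (axis j 1) *\<^sub>R axis j (1::real)) $ i"
    unfolding Basis_vec_real by (subst sum.reindex[OF inj_axis1]) simp
  also have "\<dots> = (\<Sum>j\<in>UNIV. c (axis j 1) * (axis j (1::real) $ i))" by (simp add: sum_component)
  also have "\<dots> = (\<Sum>j\<in>UNIV. if j = i then c (axis i 1) else 0)"
    by (intro sum.cong) (auto simp: axis_def)
  also have "\<dots> = c (axis i 1)" by simp
  finally show ?thesis .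
qed

lemma nn_integral_vec_prod:
  fixes f :: "'d::finite \<Rightarrow> real \<Rightarrow> ennreal"
  assumes [measurable]: "\<And>i. f i \<in> borel_measurable borel"
  shows "(\<integral>\<^sup>+x. (\<Prod>i\<in>UNIV. f i (x $ i)) \<partial>(lborel :: (real^'d) measure)) = (\<Prod>i\<in>UNIV. \<integral>\<^sup>+t. f i t \<partial>lborel)"
proof -
  have "(\<integral>\<^sup>+x. (\<Prod>i\<in>UNIV. f i (x $ i)) \<partial>(lborel :: (real^'d) measure))
      = (\<integral>\<^sup>+x. (\<Prod>i\<in>UNIV. f i ((\<Sum>b\<in>Basis. x b *\<^sub>R b) $ i)) \<partial>(\<Pi>\<^sub>M b\<in>(Basis :: (real^'d) set). lborel))"
    by (subst lborel_eq) (simp add: nn_integral_distr)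
  also have "\<dots> = (\<integral>\<^sup>+x. (\<Prod>b\<in>(Basis :: (real^'d) set). f (axis_index b) (x b)) \<partial>(\<Pi>\<^sub>M b\<in>(Basis :: (real^'d) set). lborel))"
    by (simp only: sum_Basis_vec_nth) (simp add: prod_Basis_vec axis_index)
  also have "\<dots> = (\<Prod>b\<in>(Basis :: (real^'d) set). \<integral>\<^sup>+t. f (axis_index b) t \<partial>lborel)"
    by (rule product_sigma_finite.product_nn_integral_prod) (auto simp: product_sigma_finite_def intro: sigma_finite_lborel)
  also have "\<dots> = (\<Prod>i\<in>UNIV. \<integral>\<^sup>+t. f i t \<partial>lborel)"
    by (simp add: prod_Basis_vec axis_index)
  finally show ?thesis .
qed

lemma integral_vec_prod:
  fixes f :: "'d::finite \<Rightarrow> real \<Rightarrow> real"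
  assumes int: "\<And>i. integrable lborel (f i)"
  shows "(\<integral>x. (\<Prod>i\<in>UNIV. f i (x $ i)) \<partial>(lborel :: (real^'d) measure)) = (\<Prod>i\<in>UNIV. \<integral>t. f i t \<partial>lborel)"
proof -
  have [measurable]: "f i \<in> borel_measurable borel" for i using int[of i] by auto
  have "(\<integral>x. (\<Prod>i\<in>UNIV. f i (x $ i)) \<partial>(lborel :: (real^'d) measure))
      = (\<integral>x. (\<Prod>i\<in>UNIV. f i ((\<Sum>b\<in>Basis. x b *\<^sub>R b) $ i)) \<partial>(\<Pi>\<^sub>M b\<in>(Basis :: (real^'d) set). lborel))"
    by (subst lborel_eq) (simp add: integral_distr)
  also have "\<dots> = (\<integral>x. (\<Prod>b\<in>(Basis :: (real^'d) set). f (axis_index b) (x b)) \<partial>(\<Pi>\<^sub>M b\<in>(Basis :: (real^'d) set). lborel))"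
    by (simp only: sum_Basis_vec_nth) (simp add: prod_Basis_vec axis_index)
  also have "\<dots> = (\<Prod>b\<in>(Basis :: (real^'d) set). \<integral>t. f (axis_index b) t \<partial>lborel)"
    by (rule product_sigma_finite.product_integral_prod) (auto simp: product_sigma_finite_def int intro: sigma_finite_lborel)
  also have "\<dots> = (\<Prod>i\<in>UNIV. \<integral>t. f i t \<partial>lborel)"
    by (simp add: prod_Basis_vec axis_index)
  finally show ?thesis .
qed

lemma vec_nth_measurable[measurable]: "(\<lambda>x::real^'d. x $ i) \<in> borel_measurable borel"
  by (intro borel_measurable_continuous_onI continuous_intros)

lemma cube_sets[measurable]: "cube a0 h \<in> sets (borel :: (real^'d::finite) measure)"
  unfolding cube_def by measurable

lemma cube_sets_lborel[measurable]: "cube a0 h \<in> sets (lborel :: (real^'d::finite) measure)"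
  by simp

lemma indicator_cube: "indicator (cube a0 h) x = (\<Prod>d\<in>UNIV. indicator {a0 $ d - h/2 <.. a0 $ d + h/2} (x $ d) :: 'b::comm_semiring_1)"
proof (cases "x \<in> cube a0 h")
  case True then show ?thesis by (auto simp: cube_def indicator_def)
next
  case False
  then obtain d where "\<not> (a0 $ d - h / 2 < x $ d \<and> x $ d \<le> a0 $ d + h / 2)" by (auto simp: cube_def)
  then have "\<exists>d\<in>UNIV. indicator {a0 $ d - h/2 <.. a0 $ d + h/2} (x $ d) = (0::'b)" by (auto simp: indicator_def)
  then show ?thesis using False by (simp add: prod_zero)
qed

lemma emeasure_cube:
  assumes "h > 0"
  shows "emeasure lborel (cube a0 h :: (real^'d::finite) set) = ennreal (h ^ CARD('d))"
proof -
  have "emeasure lborel (cube a0 h :: (real^'d::finite) set) = (\<integral>\<^sup>+x. indicator (cube a0 h) x \<partial>lborel)"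
    by simp
  also have "\<dots> = (\<integral>\<^sup>+x. (\<Prod>d\<in>UNIV. indicator {a0 $ d - h/2 <.. a0 $ d + h/2} (x $ d)) \<partial>(lborel :: (real^'d) measure))"
    by (simp add: indicator_cube)
  also have "\<dots> = (\<Prod>d\<in>(UNIV::'d set). \<integral>\<^sup>+t. indicator {a0 $ d - h/2 <.. a0 $ d + h/2} t \<partial>lborel)"
    by (rule nn_integral_vec_prod) simp
  also have "\<dots> = (\<Prod>d\<in>(UNIV::'d set). ennreal h)" using assms by simp
  also have "\<dots> = ennreal (h ^ CARD('d))" using assms by (simp add: ennreal_power)
  finally show ?thesis .
qed

lemma prob_space_std_normal_vec: "prob_space (std_normal_vec :: (real^'d::finite) measure)"
proof
  have "emeasure (std_normal_vec :: (real^'d) measure) UNIV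
      = (\<integral>\<^sup>+x. (\<Prod>d\<in>UNIV. ennreal (std_normal_density (x $ d))) \<partial>(lborel :: (real^'d) measure))"
    unfolding std_normal_vec_def by (simp add: emeasure_density prod_ennreal)
  also have "\<dots> = (\<Prod>d\<in>(UNIV::'d set). \<integral>\<^sup>+t. ennreal (std_normal_density t) \<partial>lborel)"
    by (rule nn_integral_vec_prod) simp
  also have "(\<integral>\<^sup>+t. ennreal (std_normal_density t) \<partial>lborel) = 1"
    by (subst nn_integral_eq_integral) auto
  finally show "emeasure (std_normal_vec :: (real^'d) measure) (space std_normal_vec) = 1"
    unfolding std_normal_vec_def by simp
qed

lemma prob_space_unif_cube:
  assumes "h > 0"
  shows "prob_space (uniform_measure lborel (cube a0 h :: (real^'d::finite) set))"
  by (rule prob_space_uniform_measure) (use emeasure_cube[OF assms, of a0] assms in auto)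

lemma integral_unif_cube:
  assumes h: "h > 0" and f[measurable]: "f \<in> borel_measurable borel"
  shows "(\<integral>x. f x \<partial>uniform_measure lborel (cube a0 h :: (real^'d::finite) set))
     = (\<integral>x. indicator (cube a0 h) x * f x \<partial>lborel) / h ^ CARD('d)"
proof -
  have hp: "h ^ CARD('d) > 0" using h by simp
  have U: "uniform_measure lborel (cube a0 h :: (real^'d::finite) set)
     = density lborel (\<lambda>x. ennreal (indicator (cube a0 h) x / h ^ CARD('d)))"
    unfolding uniform_measure_def emeasure_cube[OF h]
    using divide_ennreal[of 1 "h ^ CARD('d)"] hp by (intro density_cong) (auto simp: indicator_def)
  have "(\<integral>x. f x \<partial>uniform_measure lborel (cube a0 h :: (real^'d::finite) set))
     = (\<integral>x. (indicator (cube a0 h) x / h ^ CARD('d)) *\<^sub>R f x \<partial>lborel)"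
    unfolding U by (rule integral_density) (auto simp: hp intro!: divide_nonneg_pos)
  also have "\<dots> = (\<integral>x. indicator (cube a0 h) x * f x / h ^ CARD('d) \<partial>lborel)"
    by (intro Bochner_Integration.integral_cong) auto
  also have "\<dots> = (\<integral>x. indicator (cube a0 h) x * f x \<partial>lborel) / h ^ CARD('d)"
    by (rule integral_divide_zero)
  finally show ?thesis .
qed

lemma leg_meas[measurable]: "legendre n \<in> borel_measurable borel"
  by (rule borel_measurable_continuous_onI[OF leg_cont])

lemma int_ioc:
  fixes G :: "real \<Rightarrow> real"
  assumes "continuous_on UNIV G"
  shows "integrable lborel (\<lambda>t. indicator {lo<..hi} t * G t)"
proof -
  have "integrable lborel (\<lambda>t. indicator {lo..hi} t *\<^sub>R G t)"
    by (rule borel_integrable_compact) (auto intro: continuous_on_subset[OF assms])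
  then have "integrable lborel (\<lambda>t. indicator {lo<..hi} t *\<^sub>R (indicator {lo..hi} t *\<^sub>R G t))"
    by (rule integrable_mult_indicator[rotated]) simp
  moreover have "(\<lambda>t. indicator {lo<..hi} t *\<^sub>R (indicator {lo..hi} t *\<^sub>R G t)) = (\<lambda>t. indicator {lo<..hi} t * G t)"
    by (auto simp: indicator_def fun_eq_iff)
  ultimately show ?thesis by simp
qed

lemma leb_leg:
  "(\<integral>y. indicator {-1<..1} y * (legendre j y * legendre k y) \<partial>lborel) = (if j = k then 2 / (2 * real j + 1) else 0)"
proof -
  let ?G = "\<lambda>y. legendre j y * legendre k y"
  have c: "continuous_on {-1..1} ?G" by (intro continuous_intros leg_cont)
  have si: "set_integrable lborel {-1..1} ?G" by (rule borel_integrable_atLeastAtMost'[OF c])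
  have "(\<integral>y. indicator {-1<..1} y * ?G y \<partial>lborel) = (\<integral>y. indicator {-1..1} y *\<^sub>R ?G y \<partial>lborel)"
    by (intro integral_cong_AE) (use AE_lborel_singleton[of "-1"] in \<open>auto simp: indicator_def\<close>)
  also have "\<dots> = (LINT y:{-1..1}|lborel. ?G y)" by (simp add: set_lebesgue_integral_def)
  also have "\<dots> = integral {-1..1} ?G" by (rule set_borel_integral_eq_integral(2)[OF si])
  also have "\<dots> = (if j = k then 2 / (2 * real j + 1) else 0)"
    using leg_orth[of j k] leg_norm[of j] by auto
  finally show ?thesis .
qed

lemma one_dim:
  assumes h: "h > 0"
  shows "(\<integral>t. indicator {a - h/2<..a + h/2} t * (sqrt (2 * real j + 1) * legendre j ((t - a) / (h/2)))
     * (sqrt (2 * real k + 1) * legendre k ((t - a) / (h/2))) \<partial>lborel) = (if j = k then h else 0)"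
proof -
  let ?f = "\<lambda>t. indicator {a - h/2<..a + h/2} t * (sqrt (2 * real j + 1) * legendre j ((t - a) / (h/2)))
     * (sqrt (2 * real k + 1) * legendre k ((t - a) / (h/2)))"
  have hz: "h / 2 \<noteq> 0" using h by simp
  have "(\<integral>t. ?f t \<partial>lborel) = \<bar>h/2\<bar> *\<^sub>R (\<integral>y. ?f (a + h/2 * y) \<partial>lborel)"
    by (rule lborel_integral_real_affine[OF hz])
  also have "(\<lambda>y. ?f (a + h/2 * y)) = (\<lambda>y. (sqrt (2 * real j + 1) * sqrt (2 * real k + 1)) * (indicator {-1<..1} y * (legendre j y * legendre k y)))"
  proof
    fix y
    have "a + h/2 * y \<in> {a - h/2<..a + h/2} \<longleftrightarrow> y \<in> {-1<..1}"
    proof -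
      have "a - h/2 < a + h/2 * y \<longleftrightarrow> (h/2) * (-1) < (h/2) * y" by linarith
      also have "\<dots> \<longleftrightarrow> -1 < y" using h by (simp only: mult_less_cancel_left_pos)
      finally have "a - h/2 < a + h/2 * y \<longleftrightarrow> -1 < y" .
      moreover have "a + h/2 * y \<le> a + h/2 \<longleftrightarrow> y \<le> 1" using h by (simp add: mult_le_cancel_left1)
      ultimately show ?thesis by auto
    qed
    moreover have "(a + h/2 * y - a) / (h/2) = y" using h by simp
    ultimately show "?f (a + h/2 * y) = (sqrt (2 * real j + 1) * sqrt (2 * real k + 1)) * (indicator {-1<..1} y * (legendre j y * legendre k y))"
      by (simp add: indicator_def)
  qed
  also have "\<bar>h/2\<bar> *\<^sub>R (\<integral>y. (sqrt (2 * real j + 1) * sqrt (2 * real k + 1)) * (indicator {-1<..1} y * (legendre j y * legendre k y)) \<partial>lborel)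
     = h/2 * (sqrt (2 * real j + 1) * sqrt (2 * real k + 1)) * (if j = k then 2 / (2 * real j + 1) else 0)"
    using h by (simp add: leb_leg del: legendre.simps)
  also have "\<dots> = (if j = k then h else 0)"
  proof (cases "j = k")
    case True
    have "sqrt (2 * real j + 1) * sqrt (2 * real j + 1) = 2 * real j + 1" by simp
    then show ?thesis using True by (simp add: field_simps)
  qed simp
  finally show ?thesis .
qed

lemma p_leg_cont: "continuous_on S (p_leg j)"
  unfolding p_leg_def by (intro continuous_intros continuous_on_compose2[OF leg_cont]) auto

lemma eta_cont: "continuous_on S (eta a0 h j)"
  unfolding eta_def divide_inverse by (intro continuous_on_compose2[OF p_leg_cont[of UNIV]] continuous_intros) auto

lemma eta_meas[measurable]: "eta a0 h j \<in> borel_measurable borel"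
  by (rule borel_measurable_continuous_onI[OF eta_cont])

lemma gram_unif:
  assumes h: "h > 0"
  shows "(\<integral>x. eta a0 h j x * eta a0 h k x \<partial>uniform_measure lborel (cube a0 h :: (real^'d::finite) set))
     = (if j = k then 1 else 0)"
proof -
  define q where "q d t = indicator {a0 $ d - h/2<..a0 $ d + h/2} t * (sqrt (2 * real (j d) + 1) * legendre (j d) ((t - a0 $ d) / (h/2)))
     * (sqrt (2 * real (k d) + 1) * legendre (k d) ((t - a0 $ d) / (h/2)))" for d t
  have pw: "indicator (cube a0 h) x * (eta a0 h j x * eta a0 h k x) = (\<Prod>d\<in>UNIV. q d (x $ d))" for x :: "real^'d"
    unfolding q_def indicator_cube[of a0 h x] eta_def p_leg_def by (simp add: prod.distrib)
  have qi: "integrable lborel (q d)" for d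
    unfolding q_def mult.assoc divide_inverse by (intro int_ioc continuous_intros continuous_on_compose2[OF leg_cont]) auto
  have "(\<integral>x. eta a0 h j x * eta a0 h k x \<partial>uniform_measure lborel (cube a0 h :: (real^'d::finite) set))
     = (\<integral>x. indicator (cube a0 h) x * (eta a0 h j x * eta a0 h k x) \<partial>lborel) / h ^ CARD('d)"
    by (rule integral_unif_cube[OF h]) measurable
  also have "(\<integral>x. indicator (cube a0 h) x * (eta a0 h j x * eta a0 h k x) \<partial>(lborel :: (real^'d) measure))
       = (\<Prod>d\<in>(UNIV::'d set). \<integral>t. q d t \<partial>lborel)"
    unfolding pw by (rule integral_vec_prod[OF qi])
  also have "\<dots> = (\<Prod>d\<in>(UNIV::'d set). if j d = k d then h else 0)"
    unfolding q_def using one_dim[OF h] by simp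
  also have "\<dots> = (if j = k then h ^ CARD('d) else 0)"
  proof (cases "j = k")
    case True then show ?thesis by simp
  next
    case False
    then obtain d where "j d \<noteq> k d" by auto
    then have "(\<Prod>d\<in>UNIV. if j d = k d then h else 0) = 0" by (intro prod_zero) auto
    then show ?thesis using False by simp
  qed
  finally show ?thesis using h by simp
qed

lemma vec_nth_meas_gen[measurable]: "(\<lambda>x::('a::real_normed_vector)^'n. x $ i) \<in> borel_measurable borel"
  by (intro borel_measurable_continuous_onI continuous_intros)

lemma meas_vec:
  fixes f :: "'a \<Rightarrow> real^'d"
  assumes "\<And>i. (\<lambda>x. f x $ i) \<in> borel_measurable M"
  shows "f \<in> borel_measurable M"
proof -
  have "(\<lambda>x. f x \<bullet> b) \<in> borel_measurable M" if "b \<in> Basis" for b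
  proof -
    from that obtain i where b: "b = axis i 1" unfolding Basis_vec_real by auto
    have "(\<lambda>x. f x \<bullet> b) = (\<lambda>x. f x $ i)" unfolding b by (simp add: inner_axis)
    then show ?thesis using assms by simp
  qed
  then show ?thesis by (subst borel_measurable_euclidean_space) auto
qed

lemma sets_std[measurable_cong]: "sets (std_normal_vec :: (real^'d::finite) measure) = sets borel"
  by (simp add: std_normal_vec_def)

lemma sets_unif[measurable_cong]: "sets (uniform_measure lborel (cube a0 h :: (real^'d::finite) set)) = sets borel"
  by simp

definition Fmap :: "(real^'d \<Rightarrow> real^'d) \<Rightarrow> (real^'d \<Rightarrow> real^'d^'d) \<Rightarrow> real \<Rightarrow> real \<Rightarrow> (real^'d) \<times> (real^'d) \<Rightarrow> (real^'d::finite)" where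
  "Fmap b \<sigma> r \<Delta> = (\<lambda>(u, \<xi>). u + \<Delta> *\<^sub>R b u + sqrt \<Delta> *\<^sub>R (\<sigma> u *v trunc_vec r \<xi>))"

definition Pm :: "real^'d::finite \<Rightarrow> real \<Rightarrow> ((real^'d) \<times> (real^'d)) measure" where
  "Pm a0 h = uniform_measure lborel (cube a0 h) \<Otimes>\<^sub>M std_normal_vec"

definition sc :: "real^'d::finite \<Rightarrow> real \<Rightarrow> real^'d \<Rightarrow> real^'d" where
  "sc a0 h x = (\<chi> d. (x $ d - a0 $ d) / (h / 2))"

lemma eta_sc: "eta a0 h j x = p_leg j (sc a0 h x)"
  by (simp add: eta_def sc_def)

lemma Xlaw_eq: "Xlaw b \<sigma> a0 h r \<Delta> = distr (Pm a0 h) borel (Fmap b \<sigma> r \<Delta>)"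
  by (simp add: Xlaw_def Fmap_def Pm_def)

lemma Fmap_meas:
  assumes [measurable]: "b \<in> borel_measurable borel" "\<sigma> \<in> borel_measurable borel"
  shows "Fmap b \<sigma> r \<Delta> \<in> borel_measurable (Pm a0 h)"
proof -
  have [measurable]: "trunc_vec r \<in> borel_measurable borel"
    unfolding trunc_vec_def by (rule meas_vec) simp
  have [measurable]: "(\<lambda>z. \<sigma> (fst z) *v trunc_vec r (snd z)) \<in> borel_measurable (uniform_measure lborel (cube a0 h) \<Otimes>\<^sub>M std_normal_vec)"
    unfolding matrix_vector_mult_def by (rule meas_vec) (simp only: vec_lambda_beta, measurable)
  show ?thesis unfolding Fmap_def split_beta' Pm_def by measurable
qed

lemma prob_Pm: "h > 0 \<Longrightarrow> prob_space (Pm a0 h)"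
  unfolding Pm_def by (intro prob_space_pair prob_space_unif_cube prob_space_std_normal_vec)

lemma AE_Pm_cube:
  assumes h: "h > 0"
  shows "AE z in Pm (a0 :: real^'d::finite) h. fst z \<in> cube a0 h"
proof -
  interpret U: prob_space "uniform_measure lborel (cube a0 h)" by (rule prob_space_unif_cube[OF h])
  interpret N: prob_space "std_normal_vec :: (real^'d) measure" by (rule prob_space_std_normal_vec)
  have "emeasure (Pm a0 h) ((UNIV - cube a0 h) \<times> UNIV) = emeasure (uniform_measure lborel (cube a0 h)) (UNIV - cube a0 h) * emeasure std_normal_vec UNIV"
    unfolding Pm_def by (subst N.emeasure_pair_measure_Times) (auto simp: std_normal_vec_def)
  also have "emeasure (uniform_measure lborel (cube a0 h)) (UNIV - cube a0 h) = 0"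
    by (subst emeasure_uniform_measure) auto
  finally have z: "emeasure (Pm a0 h) ((UNIV - cube a0 h) \<times> UNIV) = 0" by simp
  show ?thesis
    by (rule AE_I[OF _ z]) (auto simp: Pm_def std_normal_vec_def)
qed

lemma integral_Pm_fst:
  assumes h: "h > 0" and [measurable]: "f \<in> borel_measurable borel"
  shows "(\<integral>z. f (fst z) \<partial>Pm (a0 :: real^'d::finite) h) = (\<integral>u. (f u :: real) \<partial>uniform_measure lborel (cube a0 h))"
proof -
  interpret N: prob_space "std_normal_vec :: (real^'d) measure" by (rule prob_space_std_normal_vec)
  have "(\<integral>z. f (fst z) \<partial>Pm a0 h) = (\<integral>u. f u \<partial>distr (Pm a0 h) (uniform_measure lborel (cube a0 h)) fst)"
    by (subst integral_distr) (auto simp: Pm_def)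
  also have "distr (Pm a0 h) (uniform_measure lborel (cube a0 h)) fst = uniform_measure lborel (cube a0 h)"
    unfolding Pm_def by (rule N.distr_pair_fst)
  finally show ?thesis .
qed

lemma trunc_comp_bound: "\<bar>trunc_vec r x $ i\<bar> \<le> \<bar>r\<bar>"
  by (simp add: trunc_vec_def)

lemma norm_trunc: "norm (trunc_vec r (x :: real^'d::finite)) \<le> real CARD('d) * \<bar>r\<bar>"
proof -
  have "norm (trunc_vec r x) \<le> (\<Sum>i\<in>UNIV. \<bar>trunc_vec r x $ i\<bar>)" by (rule norm_le_l1_cart)
  also have "\<dots> \<le> (\<Sum>i\<in>(UNIV::'d set). \<bar>r\<bar>)" by (intro sum_mono trunc_comp_bound)
  finally show ?thesis by simp
qed

lemma Fmap_close:
  fixes b :: "real^'d::finite \<Rightarrow> real^'d" and \<sigma> :: "real^'d \<Rightarrow> real^'d^'d"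
  assumes bound: "\<forall>u. norm (b u) + onorm (\<lambda>x. \<sigma> u *v x) \<le> C" and D: "\<Delta> \<ge> 0"
  shows "norm (Fmap b \<sigma> r \<Delta> (u, \<xi>) - u) \<le> \<Delta> * C + sqrt \<Delta> * C * (real CARD('d) * \<bar>r\<bar>)"
proof -
  have bl: "bounded_linear (\<lambda>x. \<sigma> u *v x)"
    by (rule matrix_vector_mul_bounded_linear)
  have on: "0 \<le> onorm (\<lambda>x. \<sigma> u *v x)" by (rule onorm_pos_le[OF bl])
  have bC: "norm (b u) \<le> C" using bound[rule_format, of u] on by linarith
  have oC: "onorm (\<lambda>x. \<sigma> u *v x) \<le> C" using bound[rule_format, of u] norm_ge_zero[of "b u"] by linarith
  have C0: "0 \<le> C" using on oC by linarith
  have "norm (\<sigma> u *v trunc_vec r \<xi>) \<le> onorm (\<lambda>x. \<sigma> u *v x) * norm (trunc_vec r \<xi>)"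
    by (rule onorm[OF bl])
  also have "\<dots> \<le> C * (real CARD('d) * \<bar>r\<bar>)"
    by (intro mult_mono oC norm_trunc) (use on C0 in auto)
  finally have s: "norm (\<sigma> u *v trunc_vec r \<xi>) \<le> C * (real CARD('d) * \<bar>r\<bar>)" .
  have "norm (Fmap b \<sigma> r \<Delta> (u, \<xi>) - u) = norm (\<Delta> *\<^sub>R b u + sqrt \<Delta> *\<^sub>R (\<sigma> u *v trunc_vec r \<xi>))"
    by (simp add: Fmap_def)
  also have "\<dots> \<le> norm (\<Delta> *\<^sub>R b u) + norm (sqrt \<Delta> *\<^sub>R (\<sigma> u *v trunc_vec r \<xi>))" by (rule norm_triangle_ineq)
  also have "\<dots> = \<Delta> * norm (b u) + sqrt \<Delta> * norm (\<sigma> u *v trunc_vec r \<xi>)" using D by simp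
  also have "\<dots> \<le> \<Delta> * C + sqrt \<Delta> * (C * (real CARD('d) * \<bar>r\<bar>))"
    by (intro add_mono mult_left_mono bC s) (use D in auto)
  finally show ?thesis by (simp add: mult.assoc)
qed

lemma sc_diff:
  assumes "h > 0"
  shows "norm (sc a0 h y - sc a0 h x) = norm (y - x) / (h / 2)"
proof -
  have "sc a0 h y - sc a0 h x = (2 / h) *\<^sub>R (y - x)"
    using assms by (simp add: sc_def Finite_Cartesian_Product.vec_eq_iff field_simps)
  then show ?thesis using assms by simp
qed

lemma sc_cube:
  assumes "h > 0" "x \<in> cube a0 h"
  shows "\<bar>sc a0 h x $ d\<bar> \<le> 1"
proof -
  have "a0 $ d - h / 2 < x $ d" "x $ d \<le> a0 $ d + h / 2" using assms(2) by (auto simp: cube_def)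
  then have "\<bar>x $ d - a0 $ d\<bar> \<le> h / 2" by (simp only: abs_le_iff) linarith
  moreover have "\<bar>sc a0 h x $ d\<bar> = \<bar>x $ d - a0 $ d\<bar> / (h / 2)" using assms(1) by (simp add: sc_def abs_divide del: times_divide_eq_right divide_divide_eq_right)
  ultimately show ?thesis using assms(1) by (simp add: divide_le_eq_1_pos)
qed

lemma unif_fam:
  fixes f :: "'i \<Rightarrow> 'a::metric_space \<Rightarrow> real"
  assumes "finite I" "compact S" "\<forall>i\<in>I. continuous_on S (f i)" "e > 0"
  shows "\<exists>d>0. \<forall>i\<in>I. \<forall>x\<in>S. \<forall>y\<in>S. dist y x < d \<longrightarrow> \<bar>f i y - f i x\<bar> < e"
  using assms(1,3)
proof (induction I rule: finite_induct)
  case empty then show ?case by (intro exI[of _ 1]) auto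
next
  case (insert i I)
  then obtain d1 where d1: "d1 > 0" "\<forall>i\<in>I. \<forall>x\<in>S. \<forall>y\<in>S. dist y x < d1 \<longrightarrow> \<bar>f i y - f i x\<bar> < e" by auto
  have "uniformly_continuous_on S (f i)"
    using insert(4) assms(2) by (intro compact_uniformly_continuous) auto
  then obtain d2 where d2: "d2 > 0" "\<forall>x\<in>S. \<forall>y\<in>S. dist y x < d2 \<longrightarrow> dist (f i y) (f i x) < e"
    unfolding uniformly_continuous_on_def using assms(4) by metis
  show ?case
    by (intro exI[of _ "min d1 d2"]) (use d1 d2 in \<open>auto simp: dist_real_def\<close>)
qed

definition box2 :: "(real^'d::finite) set" where "box2 = {y. \<forall>d. \<bar>y $ d\<bar> \<le> 2}"

lemma box2_cbox: "box2 = cbox (\<chi> d. -2) (\<chi> d. 2)"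
  unfolding box2_def set_eq_iff mem_box_cart mem_Collect_eq vec_lambda_beta
  by (intro allI iff_allI) (auto simp: abs_le_iff)

lemma compact_box2: "compact box2"
  unfolding box2_cbox by simp

lemma in_box2:
  assumes "\<forall>d. \<bar>y $ d\<bar> \<le> 1" "norm (y' - y) \<le> 1"
  shows "y' \<in> box2"
proof -
  have "\<bar>y' $ d\<bar> \<le> 2" for d
  proof -
    have "\<bar>(y' - y) $ d\<bar> \<le> norm (y' - y)" by (rule component_le_norm_cart)
    then show ?thesis using assms(1)[rule_format, of d] assms(2) by simp
  qed
  then show ?thesis by (simp add: box2_def)
qed

lemma gram_close:
  fixes b :: "real^'d::finite \<Rightarrow> real^'d" and \<sigma> :: "real^'d \<Rightarrow> real^'d^'d"
  assumes [measurable]: "b \<in> borel_measurable borel" "\<sigma> \<in> borel_measurable borel"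
    and bound: "\<forall>u. norm (b u) + onorm (\<lambda>x. \<sigma> u *v x) \<le> C" and D: "\<Delta> \<ge> 0" and h: "h > 0"
    and rho: "(\<Delta> * C + sqrt \<Delta> * C * (real CARD('d) * \<bar>r\<bar>)) / (h / 2) \<le> 1"
    and close: "\<forall>y y'. (\<forall>d. \<bar>y $ d\<bar> \<le> 1) \<longrightarrow> norm (y' - y) \<le> (\<Delta> * C + sqrt \<Delta> * C * (real CARD('d) * \<bar>r\<bar>)) / (h / 2)
        \<longrightarrow> \<bar>p_leg j y' * p_leg k y' - p_leg j y * p_leg k y\<bar> \<le> e"
  shows "\<bar>gram (Xlaw b \<sigma> a0 h r \<Delta>) a0 h j k - (if j = k then 1 else 0)\<bar> \<le> e"
proof -
  let ?P = "Pm a0 h" and ?F = "Fmap b \<sigma> r \<Delta>"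
  let ?s = "(\<Delta> * C + sqrt \<Delta> * C * (real CARD('d) * \<bar>r\<bar>)) / (h / 2)"
  define G where "G y = p_leg j y * p_leg k y" for y
  define g where "g x = G (sc a0 h x)" for x
  interpret P: prob_space ?P by (rule prob_Pm[OF h])
  have Fm[measurable]: "?F \<in> borel_measurable ?P" by (rule Fmap_meas) simp_all
  have gm[measurable]: "g \<in> borel_measurable borel"
    unfolding g_def G_def eta_sc[symmetric] by simp
  have Gc: "continuous_on box2 G" unfolding G_def by (intro continuous_intros p_leg_cont)
  obtain B where B: "\<forall>y\<in>box2. \<bar>G y\<bar> \<le> B"
    using compact_imp_bounded[OF compact_continuous_image[OF Gc compact_box2]]
    unfolding bounded_iff by auto
  have key: "AE z in ?P. sc a0 h (fst z) \<in> box2 \<and> sc a0 h (?F z) \<in> box2 \<and> \<bar>g (?F z) - g (fst z)\<bar> \<le> e"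
    using AE_Pm_cube[OF h, of a0]
  proof eventually_elim
    case (elim z)
    obtain u \<xi> where z: "z = (u, \<xi>)" by fastforce
    have u1: "\<forall>d. \<bar>sc a0 h u $ d\<bar> \<le> 1" using sc_cube[OF h] elim z by auto
    have "norm (sc a0 h (?F z) - sc a0 h u) = norm (?F z - u) / (h / 2)" by (rule sc_diff[OF h])
    also have "\<dots> \<le> ?s" unfolding z using Fmap_close[OF bound D] h by (intro divide_right_mono) auto
    finally have ns: "norm (sc a0 h (?F z) - sc a0 h u) \<le> ?s" .
    have "sc a0 h u \<in> box2" using u1 by (auto simp: box2_def intro: order_trans)
    moreover have "sc a0 h (?F z) \<in> box2" using in_box2[OF u1] ns rho by simp
    moreover have "\<bar>g (?F z) - g u\<bar> \<le> e" unfolding g_def G_def using close u1 ns by blast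
    ultimately show ?case using z by simp
  qed
  have i1: "integrable ?P (\<lambda>z. g (?F z))"
  proof (rule P.integrable_const_bound[of _ B])
    show "AE z in ?P. norm (g (?F z)) \<le> B" using key by eventually_elim (use B in \<open>auto simp: g_def\<close>)
    show "(\<lambda>z. g (?F z)) \<in> borel_measurable ?P" by measurable
  qed
  have i2: "integrable ?P (\<lambda>z. g (fst z))"
  proof (rule P.integrable_const_bound[of _ B])
    show "AE z in ?P. norm (g (fst z)) \<le> B" using key by eventually_elim (use B in \<open>auto simp: g_def\<close>)
    show "(\<lambda>z. g (fst z)) \<in> borel_measurable ?P" by (simp add: Pm_def)
  qed
  have "gram (Xlaw b \<sigma> a0 h r \<Delta>) a0 h j k = (\<integral>x. g x \<partial>distr ?P borel ?F)"
    unfolding gram_def Xlaw_eq g_def G_def eta_sc ..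
  also have "\<dots> = (\<integral>z. g (?F z) \<partial>?P)" by (rule integral_distr) simp_all
  finally have e1: "gram (Xlaw b \<sigma> a0 h r \<Delta>) a0 h j k = (\<integral>z. g (?F z) \<partial>?P)" .
  have "(\<integral>z. g (fst z) \<partial>?P) = (\<integral>u. g u \<partial>uniform_measure lborel (cube a0 h))"
    by (rule integral_Pm_fst[OF h]) simp
  also have "\<dots> = (if j = k then 1 else 0)" unfolding g_def G_def eta_sc[symmetric] by (rule gram_unif[OF h])
  finally have e2: "(\<integral>z. g (fst z) \<partial>?P) = (if j = k then 1 else 0)" .
  have "\<bar>(\<integral>z. g (?F z) \<partial>?P) - (\<integral>z. g (fst z) \<partial>?P)\<bar> = \<bar>\<integral>z. g (?F z) - g (fst z) \<partial>?P\<bar>"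
    using i1 i2 by simp
  also have "\<dots> \<le> (\<integral>z. \<bar>g (?F z) - g (fst z)\<bar> \<partial>?P)" by (rule integral_abs_bound)
  also have "\<dots> \<le> (\<integral>z. e \<partial>?P)"
    by (rule integral_mono_AE) (use key i1 i2 in \<open>auto elim!: AE_mp\<close>)
  also have "\<dots> = e" by (simp add: P.prob_space)
  finally show ?thesis unfolding e1 e2 .
qed

lemma F_near:
  fixes b :: "real^'d::finite \<Rightarrow> real^'d" and \<sigma> :: "real^'d \<Rightarrow> real^'d^'d"
  assumes bound: "\<forall>u. norm (b u) + onorm (\<lambda>x. \<sigma> u *v x) \<le> C" and D: "\<Delta> \<ge> 0"
    and u: "u \<in> cube a0 h"
  shows "\<bar>Fmap b \<sigma> r \<Delta> (u, \<xi>) $ d - a0 $ d\<bar> \<le> h / 2 + (\<Delta> * C + sqrt \<Delta> * C * (real CARD('d) * \<bar>r\<bar>))"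
proof -
  have "a0 $ d - h / 2 < u $ d" "u $ d \<le> a0 $ d + h / 2" using u by (auto simp: cube_def)
  then have a: "\<bar>u $ d - a0 $ d\<bar> \<le> h / 2" by (simp only: abs_le_iff) linarith
  have "\<bar>(Fmap b \<sigma> r \<Delta> (u, \<xi>) - u) $ d\<bar> \<le> norm (Fmap b \<sigma> r \<Delta> (u, \<xi>) - u)" by (rule component_le_norm_cart)
  also have "\<dots> \<le> \<Delta> * C + sqrt \<Delta> * C * (real CARD('d) * \<bar>r\<bar>)" by (rule Fmap_close[OF bound D])
  finally have "\<bar>Fmap b \<sigma> r \<Delta> (u, \<xi>) $ d - u $ d\<bar> \<le> \<Delta> * C + sqrt \<Delta> * C * (real CARD('d) * \<bar>r\<bar>)" by simp
  then show ?thesis using a by linarith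
qed

lemma AE_F_near:
  fixes b :: "real^'d::finite \<Rightarrow> real^'d" and \<sigma> :: "real^'d \<Rightarrow> real^'d^'d"
  assumes bound: "\<forall>u. norm (b u) + onorm (\<lambda>x. \<sigma> u *v x) \<le> C" and D: "\<Delta> \<ge> 0" and h: "h > 0"
  shows "AE z in Pm a0 h. \<forall>d. \<bar>Fmap b \<sigma> r \<Delta> z $ d - a0 $ d\<bar> \<le> h / 2 + (\<Delta> * C + sqrt \<Delta> * C * (real CARD('d) * \<bar>r\<bar>))"
  using AE_Pm_cube[OF h]
proof eventually_elim
  case (elim z)
  obtain u \<xi> where z: "z = (u, \<xi>)" by fastforce
  have "u \<in> cube a0 h" using elim z by simp
  from F_near[OF bound D this] show ?case unfolding z by blast
qed

lemma supp_bound: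
  fixes b :: "real^'d::finite \<Rightarrow> real^'d" and \<sigma> :: "real^'d \<Rightarrow> real^'d^'d"
  assumes [measurable]: "b \<in> borel_measurable borel" "\<sigma> \<in> borel_measurable borel"
    and bound: "\<forall>u. norm (b u) + onorm (\<lambda>x. \<sigma> u *v x) \<le> C" and D: "\<Delta> \<ge> 0" and h: "h > 0"
    and x: "x \<in> supp_measure (Xlaw b \<sigma> a0 h r \<Delta>)"
  shows "\<bar>x $ d - a0 $ d\<bar> \<le> h / 2 + (\<Delta> * C + sqrt \<Delta> * C * (real CARD('d) * \<bar>r\<bar>))"
proof (rule ccontr)
  let ?c = "h / 2 + (\<Delta> * C + sqrt \<Delta> * C * (real CARD('d) * \<bar>r\<bar>))"
  let ?F = "Fmap b \<sigma> r \<Delta>"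
  assume "\<not> ?thesis"
  then have gt: "\<bar>x $ d - a0 $ d\<bar> > ?c" by simp
  define e where "e = \<bar>x $ d - a0 $ d\<bar> - ?c"
  have e: "e > 0" using gt by (simp add: e_def)
  have Fm[measurable]: "?F \<in> borel_measurable (Pm a0 h)" by (rule Fmap_meas) simp_all
  have nearAE: "AE z in Pm a0 h. \<forall>d. \<bar>?F z $ d - a0 $ d\<bar> \<le> ?c" by (rule AE_F_near[OF bound D h])
  have "AE z in Pm a0 h. \<not> (?F z \<in> ball x e)"
    using nearAE
  proof eventually_elim
    case (elim z)
    show ?case
    proof
      assume "?F z \<in> ball x e"
      then have "norm (x - ?F z) < e" by (simp add: dist_norm)
      moreover have "\<bar>(x - ?F z) $ d\<bar> \<le> norm (x - ?F z)" by (rule component_le_norm_cart)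
      ultimately have "\<bar>x $ d - ?F z $ d\<bar> < e" by simp
      then show False using elim[rule_format, of d] unfolding e_def by linarith
    qed
  qed
  then have "emeasure (Pm a0 h) {z \<in> space (Pm a0 h). ?F z \<in> ball x e} = 0" by (rule emeasure_eq_0_AE)
  moreover have "emeasure (Xlaw b \<sigma> a0 h r \<Delta>) (ball x e) = emeasure (Pm a0 h) {z \<in> space (Pm a0 h). ?F z \<in> ball x e}"
    unfolding Xlaw_eq by (subst emeasure_distr) (auto intro!: arg_cong[where f="emeasure (Pm a0 h)"])
  ultimately have "emeasure (Xlaw b \<sigma> a0 h r \<Delta>) (ball x e) = 0" by simp
  then show False using x e unfolding supp_measure_def by auto
qed

lemma supp_ne:
  fixes b :: "real^'d::finite \<Rightarrow> real^'d" and \<sigma> :: "real^'d \<Rightarrow> real^'d^'d"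
  assumes [measurable]: "b \<in> borel_measurable borel" "\<sigma> \<in> borel_measurable borel"
    and bound: "\<forall>u. norm (b u) + onorm (\<lambda>x. \<sigma> u *v x) \<le> C" and D: "\<Delta> \<ge> 0" and h: "h > 0"
  shows "supp_measure (Xlaw b \<sigma> a0 h r \<Delta>) \<noteq> {}"
proof
  let ?c = "h / 2 + (\<Delta> * C + sqrt \<Delta> * C * (real CARD('d) * \<bar>r\<bar>))"
  let ?F = "Fmap b \<sigma> r \<Delta>"
  let ?M = "Xlaw b \<sigma> a0 h r \<Delta>"
  define T where "T = {y :: real^'d. \<forall>d. \<bar>y $ d - a0 $ d\<bar> \<le> ?c}"
  have Tc: "T = cbox (\<chi> d. a0 $ d - ?c) (\<chi> d. a0 $ d + ?c)"
    unfolding T_def set_eq_iff mem_box_cart mem_Collect_eq vec_lambda_beta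
    by (intro allI iff_allI) (auto simp: abs_le_iff)
  have cT: "compact T" unfolding Tc by simp
  have Ts[measurable]: "T \<in> sets borel" unfolding Tc by simp
  assume "supp_measure ?M = {}"
  then have "\<forall>x. \<exists>e>0. emeasure ?M (ball x e) = 0" unfolding supp_measure_def by auto
  then obtain E where E: "\<And>x. E x > 0" "\<And>x. emeasure ?M (ball x (E x)) = 0" by metis
  have cover: "T \<subseteq> (\<Union>c\<in>T. ball c (E c))" using E(1) by auto
  obtain C' where C': "C' \<subseteq> T" "finite C'" "T \<subseteq> (\<Union>c\<in>C'. ball c (E c))"
    using compactE_image[OF cT, where C = T and f = "\<lambda>c. ball c (E c)"] cover open_ball by blast
  have "emeasure ?M T \<le> emeasure ?M (\<Union>c\<in>C'. ball c (E c))"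
    by (intro emeasure_mono C'(3)) (auto simp: Xlaw_eq intro!: borel_open)
  also have "\<dots> \<le> (\<Sum>c\<in>C'. emeasure ?M (ball c (E c)))"
    by (intro emeasure_subadditive_finite C'(2)) (auto simp: Xlaw_eq intro!: borel_open)
  also have "\<dots> = 0" using E(2) by simp
  finally have z: "emeasure ?M T = 0" by simp
  interpret P: prob_space "Pm a0 h" by (rule prob_Pm[OF h])
  have Fm[measurable]: "?F \<in> borel_measurable (Pm a0 h)" by (rule Fmap_meas) simp_all
  interpret M: prob_space ?M unfolding Xlaw_eq by (rule P.prob_space_distr) simp
  have nearAE: "AE z in Pm a0 h. \<forall>d. \<bar>?F z $ d - a0 $ d\<bar> \<le> ?c" by (rule AE_F_near[OF bound D h])
  have "AE y in ?M. y \<in> T"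
    unfolding Xlaw_eq using nearAE
    by (subst AE_distr_iff) (auto simp: T_def)
  then have "emeasure ?M T = 1" by (intro M.emeasure_eq_1_AE) (auto simp: Xlaw_eq)
  then show False using z by simp
qed

lemma p_leg_sq_le:
  assumes "\<forall>d. \<bar>y $ d\<bar> \<le> 1"
  shows "(p_leg j y)^2 \<le> (\<Prod>d\<in>UNIV. 2 * real (j d) + 1)"
proof -
  have "(p_leg j y)^2 = (\<Prod>d\<in>UNIV. (2 * real (j d) + 1) * (legendre (j d) (y $ d))^2)"
    unfolding p_leg_def prod_power_distrib by (intro prod.cong) (auto simp: power_mult_distrib)
  also have "\<dots> \<le> (\<Prod>d\<in>UNIV. (2 * real (j d) + 1))"
    by (intro prod_mono conjI mult_nonneg_nonneg mult_left_le) (use assms leg_bound in auto)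
  finally show ?thesis .
qed

lemma clamp_lem:
  fixes t s :: real
  assumes "\<bar>t\<bar> \<le> 1 + s" "0 \<le> s"
  shows "\<bar>t - max (-1) (min 1 t)\<bar> \<le> s"
  using assms by (auto simp: abs_le_iff max_def min_def)

lemma m_bound:
  fixes b :: "real^'d::finite \<Rightarrow> real^'d" and \<sigma> :: "real^'d \<Rightarrow> real^'d^'d"
  assumes [measurable]: "b \<in> borel_measurable borel" "\<sigma> \<in> borel_measurable borel"
    and bound: "\<forall>u. norm (b u) + onorm (\<lambda>x. \<sigma> u *v x) \<le> C" and D: "\<Delta> \<ge> 0" and h: "h > 0"
    and close2: "\<forall>y y'. (\<forall>d. \<bar>y $ d\<bar> \<le> 1) \<longrightarrow>
        norm (y' - y) \<le> real CARD('d) * ((\<Delta> * C + sqrt \<Delta> * C * (real CARD('d) * \<bar>r\<bar>)) / (h / 2)) \<longrightarrow>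
        \<bar>(\<Sum>j\<in>(multi_idx Q :: ('d \<Rightarrow> nat) set). (p_leg j y')^2) - (\<Sum>j\<in>(multi_idx Q :: ('d \<Rightarrow> nat) set). (p_leg j y)^2)\<bar> \<le> e"
  shows "0 \<le> m_sup (Xlaw b \<sigma> a0 h r \<Delta>) a0 h Q \<and>
    m_sup (Xlaw b \<sigma> a0 h r \<Delta>) a0 h Q \<le> (\<Sum>j\<in>(multi_idx Q :: ('d \<Rightarrow> nat) set). \<Prod>d\<in>UNIV. 2 * real (j d) + 1) + e"
proof -
  let ?\<rho> = "\<Delta> * C + sqrt \<Delta> * C * (real CARD('d) * \<bar>r\<bar>)"
  let ?s = "?\<rho> / (h / 2)"
  let ?J = "multi_idx Q :: ('d \<Rightarrow> nat) set"
  let ?S0 = "\<Sum>j\<in>?J. \<Prod>d\<in>UNIV. 2 * real (j d) + 1"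
  let ?V = "supp_measure (Xlaw b \<sigma> a0 h r \<Delta>)"
  define Hf where "Hf y = (\<Sum>j\<in>?J. (p_leg j y)^2)" for y
  define f where "f x = (\<Sum>j\<in>?J. (eta a0 h j x)^2)" for x
  have fH: "f x = Hf (sc a0 h x)" for x unfolding f_def Hf_def eta_sc ..
  have f0: "0 \<le> f x" for x unfolding f_def by (intro sum_nonneg) auto
  have fle: "f x \<le> ?S0 + e" if x: "x \<in> ?V" for x
  proof -
    define y where "y = sc a0 h x"
    define y' where "y' = (\<chi> d. max (-1) (min 1 (y $ d)))"
    have yb: "\<bar>y $ d\<bar> \<le> 1 + ?s" for d
    proof -
      have "\<bar>x $ d - a0 $ d\<bar> \<le> h / 2 + ?\<rho>" by (rule supp_bound[OF assms(1,2) bound D h x])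
      moreover have "\<bar>y $ d\<bar> = \<bar>x $ d - a0 $ d\<bar> / (h / 2)" using h
        by (simp add: y_def sc_def abs_divide del: times_divide_eq_right divide_divide_eq_right)
      ultimately have "\<bar>y $ d\<bar> \<le> (h / 2 + ?\<rho>) / (h / 2)" using h by (simp add: divide_right_mono)
      also have "\<dots> = 1 + ?s" using h by (simp add: add_divide_distrib)
      finally show ?thesis .
    qed
    have y'1: "\<forall>d. \<bar>y' $ d\<bar> \<le> 1" by (simp add: y'_def abs_le_iff)
    have C0: "0 \<le> C" using bound[rule_format, of 0] onorm_pos_le[OF matrix_vector_mul_bounded_linear[of "\<sigma> 0"]]
      norm_ge_zero[of "b 0"] by linarith
    have s0: "0 \<le> ?s" using C0 D h by (intro divide_nonneg_pos add_nonneg_nonneg mult_nonneg_nonneg) auto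
    have dd: "\<bar>(y - y') $ d\<bar> \<le> ?s" for d
      using clamp_lem[OF yb[of d] s0] by (simp add: y'_def)
    have "norm (y - y') \<le> (\<Sum>d\<in>UNIV. \<bar>(y - y') $ d\<bar>)" by (rule norm_le_l1_cart)
    also have "\<dots> \<le> (\<Sum>d\<in>(UNIV::'d set). ?s)" by (intro sum_mono dd)
    finally have ny: "norm (y - y') \<le> real CARD('d) * ?s" by simp
    have "\<bar>Hf y - Hf y'\<bar> \<le> e" using close2 y'1 ny unfolding Hf_def by blast
    moreover have "Hf y' \<le> ?S0" unfolding Hf_def by (intro sum_mono p_leg_sq_le y'1)
    ultimately show ?thesis unfolding fH y_def[symmetric] by linarith
  qed
  have ne: "?V \<noteq> {}" by (rule supp_ne[OF assms(1,2) bound D h])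
  have bdd: "bdd_above (f ` ?V)" using fle by (intro bdd_aboveI2) 
  have "m_sup (Xlaw b \<sigma> a0 h r \<Delta>) a0 h Q = (SUP x\<in>?V. f x)" unfolding m_sup_def f_def ..
  moreover have "(SUP x\<in>?V. f x) \<le> ?S0 + e" using ne fle by (intro cSUP_least) auto
  moreover have "0 \<le> (SUP x\<in>?V. f x)"
  proof -
    obtain x0 where "x0 \<in> ?V" using ne by blast
    then have "f x0 \<le> (SUP x\<in>?V. f x)" using bdd by (intro cSUP_upper)
    then show ?thesis using f0[of x0] by linarith
  qed
  ultimately show ?thesis by simp
qed

definition nat_eig :: "nat \<Rightarrow> (nat \<Rightarrow> nat \<Rightarrow> real) \<Rightarrow> real \<Rightarrow> bool" where
  "nat_eig n A l \<longleftrightarrow> (\<exists>v. (\<exists>i<n. v i \<noteq> 0) \<and> (\<forall>i<n. (\<Sum>j<n. A i j * v j) = l * v i))"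

lemma nat_eig_spectrum:
  assumes "nat_eig n A l"
  shows "l \<in> spectrum (Matrix.mat n n (\<lambda>(i,j). A i j))"
proof -
  from assms obtain v where v: "\<exists>i<n. v i \<noteq> 0" "\<forall>i<n. (\<Sum>j<n. A i j * v j) = l * v i"
    unfolding nat_eig_def by blast
  let ?B = "Matrix.mat n n (\<lambda>(i,j). A i j)"
  let ?w = "Matrix.vec n v"
  have "eigenvector ?B ?w l"
    unfolding eigenvector_def
  proof (intro conjI)
    show "?w \<in> carrier_vec (dim_row ?B)" by simp
    show "?w \<noteq> 0\<^sub>v (dim_row ?B)" using v(1) by (auto simp: vec_eq_iff)
    show "?B *\<^sub>v ?w = l \<cdot>\<^sub>v ?w"
      using v(2) by (auto simp: vec_eq_iff scalar_prod_def row_def lessThan_atLeast0)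
  qed
  then show ?thesis unfolding spectrum_def eigenvalue_def by auto
qed

lemma nat_eig_finite: "finite {l. nat_eig n A l}"
proof -
  have "{l. nat_eig n A l} \<subseteq> spectrum (Matrix.mat n n (\<lambda>(i,j). A i j))"
    using nat_eig_spectrum by blast
  moreover have "finite (spectrum (Matrix.mat n n (\<lambda>(i,j). A i j)))"
    by (rule card_finite_spectrum(1)[of _ n]) simp
  ultimately show ?thesis by (rule finite_subset)
qed

lemma nat_eig_exists:
  assumes n: "n > 0" and sym: "\<And>i j. i < n \<Longrightarrow> j < n \<Longrightarrow> A i j = A j i"
  shows "\<exists>l. nat_eig n A l"
proof -
  let ?B = "Matrix.mat n n (\<lambda>(i,j). complex_of_real (A i j))"
  have "spectrum ?B \<noteq> {}" by (rule spectrum_non_empty[OF _ n]) simp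
  then obtain mu w where ev: "eigenvector ?B w mu" unfolding spectrum_def eigenvalue_def by auto
  define W where "W i = vec_index w i" for i
  have wc: "w \<in> carrier_vec n" and wn: "w \<noteq> 0\<^sub>v n" and eq0: "?B *\<^sub>v w = mu \<cdot>\<^sub>v w"
    using ev unfolding eigenvector_def by auto
  have Wnz: "\<exists>i<n. W i \<noteq> 0" using wc wn unfolding W_def by (auto simp: vec_eq_iff)
  have eq: "(\<Sum>j<n. complex_of_real (A i j) * W j) = mu * W i" if "i < n" for i
  proof -
    have "vec_index (?B *\<^sub>v w) i = vec_index (mu \<cdot>\<^sub>v w) i" using eq0 by simp
    then show ?thesis using that wc
      by (simp add: scalar_prod_def row_def W_def lessThan_atLeast0 mult.commute)
  qed
  define S where "S = (\<Sum>i<n. cnj (W i) * (\<Sum>j<n. complex_of_real (A i j) * W j))"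
  have S1: "S = mu * (\<Sum>i<n. complex_of_real ((cmod (W i))^2))"
  proof -
    have "S = (\<Sum>i<n. cnj (W i) * (mu * W i))" unfolding S_def by (intro sum.cong) (auto simp: eq)
    also have "\<dots> = mu * (\<Sum>i<n. complex_of_real ((cmod (W i))^2))"
      unfolding sum_distrib_left complex_norm_square by (intro sum.cong) (auto simp: algebra_simps)
    finally show ?thesis .
  qed
  have "cnj S = (\<Sum>i<n. \<Sum>j<n. W i * complex_of_real (A i j) * cnj (W j))"
    unfolding S_def by (simp add: sum_distrib_left mult.assoc)
  also have "\<dots> = (\<Sum>j<n. \<Sum>i<n. W i * complex_of_real (A i j) * cnj (W j))"
    by (rule sum.swap)
  also have "\<dots> = (\<Sum>j<n. cnj (W j) * (\<Sum>i<n. complex_of_real (A j i) * W i))"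
    unfolding sum_distrib_left by (intro sum.cong refl) (simp add: sym mult.commute mult.left_commute)
  finally have Sreal: "cnj S = S" unfolding S_def .
  define N where "N = (\<Sum>i<n. (cmod (W i))^2)"
  obtain i0 where i0: "i0 < n" "W i0 \<noteq> 0" using Wnz by blast
  have Npos: "N > 0" unfolding N_def using i0
    by (intro sum_pos2[of "{..<n}" i0]) auto
  have S2: "S = mu * complex_of_real N" unfolding S1 N_def by simp
  have "Im mu = 0"
  proof -
    have "Im S = Im mu * N" unfolding S2 by simp
    moreover have "Im S = 0" using Sreal by (metis Reals_cnj_iff complex_is_Real_iff)
    ultimately show ?thesis using Npos by simp
  qed
  define r where "r = Re mu"
  have mur: "mu = complex_of_real r" using \<open>Im mu = 0\<close> unfolding r_def by (simp add: complex_eq_iff)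
  have eqRe: "(\<Sum>j<n. A i j * Re (W j)) = r * Re (W i)" if "i < n" for i
    using arg_cong[OF eq[OF that], of Re] unfolding mur by (simp add: Re_sum)
  have eqIm: "(\<Sum>j<n. A i j * Im (W j)) = r * Im (W i)" if "i < n" for i
    using arg_cong[OF eq[OF that], of Im] unfolding mur by (simp add: Im_sum)
  show ?thesis
  proof (cases "\<exists>i<n. Re (W i) \<noteq> 0")
    case True
    show ?thesis unfolding nat_eig_def
      by (intro exI[of _ r] exI[of _ "\<lambda>j. Re (W j)"]) (use True eqRe in auto)
  next
    case False
    then have "\<exists>i<n. Im (W i) \<noteq> 0" using Wnz by (auto simp: complex_eq_iff)
    then show ?thesis unfolding nat_eig_def
      by (intro exI[of _ r] exI[of _ "\<lambda>j. Im (W j)"]) (use eqIm in auto)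
  qed
qed

lemma gersh:
  assumes fin: "finite J" and close: "\<forall>j\<in>J. \<forall>k\<in>J. \<bar>A j k - (if j = k then 1 else 0)\<bar> \<le> e"
    and ev: "is_eigenvalue_on J A l"
  shows "\<bar>l - 1\<bar> \<le> real (card J) * e"
proof -
  from ev obtain v where v: "\<exists>k\<in>J. v k \<noteq> 0" "\<forall>k\<in>J. (\<Sum>\<kappa>\<in>J. A k \<kappa> * v \<kappa>) = l * v k"
    unfolding is_eigenvalue_on_def by blast
  define M where "M = Max ((\<lambda>k. \<bar>v k\<bar>) ` J)"
  have Jne: "J \<noteq> {}" using v(1) by blast
  have "M \<in> (\<lambda>k. \<bar>v k\<bar>) ` J" unfolding M_def using fin Jne by (intro Max_in) auto
  then obtain k0 where k0: "k0 \<in> J" "\<bar>v k0\<bar> = M" by auto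
  have le: "\<bar>v k\<bar> \<le> M" if "k \<in> J" for k unfolding M_def using fin that by (intro Max_ge) auto
  have Mpos: "M > 0" using v(1) le by force
  have d: "(\<Sum>\<kappa>\<in>J. (if k0 = \<kappa> then 1 else 0) * v \<kappa>) = v k0"
  proof -
    have "(\<Sum>\<kappa>\<in>J. (if k0 = \<kappa> then 1 else 0) * v \<kappa>) = (\<Sum>\<kappa>\<in>J. if k0 = \<kappa> then v \<kappa> else 0)"
      by (intro sum.cong) auto
    then show ?thesis using k0 fin by simp
  qed
  have ev0: "(\<Sum>\<kappa>\<in>J. A k0 \<kappa> * v \<kappa>) = l * v k0" using v(2) k0(1) by blast
  have "(l - 1) * v k0 = (\<Sum>\<kappa>\<in>J. A k0 \<kappa> * v \<kappa>) - (\<Sum>\<kappa>\<in>J. (if k0 = \<kappa> then 1 else 0) * v \<kappa>)"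
    unfolding d ev0 by (simp add: algebra_simps)
  also have "\<dots> = (\<Sum>\<kappa>\<in>J. (A k0 \<kappa> - (if k0 = \<kappa> then 1 else 0)) * v \<kappa>)"
    by (simp add: sum_subtractf left_diff_distrib)
  finally have eq: "(l - 1) * v k0 = (\<Sum>\<kappa>\<in>J. (A k0 \<kappa> - (if k0 = \<kappa> then 1 else 0)) * v \<kappa>)" .
  have "\<bar>l - 1\<bar> * M = \<bar>(l - 1) * v k0\<bar>" using k0 by (simp add: abs_mult)
  also have "\<dots> \<le> (\<Sum>\<kappa>\<in>J. \<bar>(A k0 \<kappa> - (if k0 = \<kappa> then 1 else 0)) * v \<kappa>\<bar>)"
    unfolding eq by (rule sum_abs)
  also have "\<dots> \<le> (\<Sum>\<kappa>\<in>J. e * M)"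
    unfolding abs_mult using close k0(1) le
    by (intro sum_mono mult_mono) (auto intro: order_trans[OF abs_ge_zero])
  also have "\<dots> = real (card J) * e * M" by simp
  finally show ?thesis using Mpos by simp
qed

lemma eig_J:
  assumes fin: "finite J" and ne: "J \<noteq> {}" and sym: "\<forall>j\<in>J. \<forall>k\<in>J. A j k = A k j"
    and close: "\<forall>j\<in>J. \<forall>k\<in>J. \<bar>A j k - (if j = k then 1 else 0)\<bar> \<le> e"
  shows "1 - real (card J) * e \<le> lambda_min_on J A \<and> lambda_min_on J A \<le> lambda_max_on J A
     \<and> lambda_max_on J A \<le> 1 + real (card J) * e"
proof -
  define n where "n = card J"
  obtain f where f: "bij_betw f {0..<n} J" using ex_bij_betw_nat_finite[OF fin] unfolding n_def by blast
  have fin': "f i \<in> J" if "i < n" for i using f that by (auto simp: bij_betw_def)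
  let ?B = "\<lambda>i j. A (f i) (f j)"
  have sumJ: "(\<Sum>\<kappa>\<in>J. g \<kappa>) = (\<Sum>j<n. g (f j))" for g :: "_ \<Rightarrow> real"
    using sum.reindex_bij_betw[OF f, of g] by (simp add: lessThan_atLeast0)
  define E where "E = {l. is_eigenvalue_on J A l}"
  have c1: "nat_eig n ?B l" if "l \<in> E" for l
  proof -
    from that obtain v where v: "\<exists>k\<in>J. v k \<noteq> 0" "\<forall>k\<in>J. (\<Sum>\<kappa>\<in>J. A k \<kappa> * v \<kappa>) = l * v k"
      unfolding E_def is_eigenvalue_on_def by blast
    from v(1) obtain k where k: "k \<in> J" "v k \<noteq> 0" by blast
    then obtain i where i: "i < n" "f i = k" using f by (auto simp: bij_betw_def)
    show ?thesis unfolding nat_eig_def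
      by (intro exI[of _ "\<lambda>i. v (f i)"] conjI) (use i k v(2) fin' sumJ in auto)
  qed
  have c2: "l \<in> E" if "nat_eig n ?B l" for l
  proof -
    from that obtain w where w: "\<exists>i<n. w i \<noteq> 0" "\<forall>i<n. (\<Sum>j<n. ?B i j * w j) = l * w i"
      unfolding nat_eig_def by blast
    define g where "g = inv_into {0..<n} f"
    have gf: "g (f i) = i" if "i < n" for i using f that unfolding g_def by (auto simp: bij_betw_def inv_into_f_f)
    have fg: "f (g k) = k" "g k < n" if "k \<in> J" for k using f that unfolding g_def
      by (auto simp: bij_betw_def f_inv_into_f inv_into_into[where A="{0..<n}", simplified])
    show ?thesis unfolding E_def is_eigenvalue_on_def mem_Collect_eq
    proof (intro exI[of _ "\<lambda>k. w (g k)"] conjI)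
      show "\<exists>k\<in>J. w (g k) \<noteq> 0" using w(1) gf fin' by metis
      show "\<forall>k\<in>J. (\<Sum>\<kappa>\<in>J. A k \<kappa> * w (g \<kappa>)) = l * w (g k)"
      proof
        fix k assume k: "k \<in> J"
        have "(\<Sum>\<kappa>\<in>J. A k \<kappa> * w (g \<kappa>)) = (\<Sum>j<n. A k (f j) * w j)" unfolding sumJ
          by (intro sum.cong) (auto simp: gf)
        also have "\<dots> = (\<Sum>j<n. ?B (g k) j * w j)" using fg[OF k] by simp
        also have "\<dots> = l * w (g k)" using w(2) fg(2)[OF k] by blast
        finally show "(\<Sum>\<kappa>\<in>J. A k \<kappa> * w (g \<kappa>)) = l * w (g k)" .
      qed
    qed
  qed
  have Efin: "finite E" using c1 by (intro finite_subset[OF _ nat_eig_finite[of n ?B]]) auto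
  have npos: "n > 0" unfolding n_def using fin ne by (simp add: card_gt_0_iff)
  obtain l0 where "nat_eig n ?B l0" using nat_eig_exists[OF npos, of ?B] sym fin' by auto
  then have Ene: "E \<noteq> {}" using c2 by blast
  have bnd: "\<bar>l - 1\<bar> \<le> real (card J) * e" if "l \<in> E" for l
    using gersh[OF fin close] that unfolding E_def by blast
  have "Min E \<in> E" "Max E \<in> E" using Efin Ene by (auto intro: Min_in Max_in)
  moreover have "Min E \<le> Max E" using Efin Ene by (meson Max_ge Min_in)
  ultimately show ?thesis unfolding lambda_min_on_def lambda_max_on_def E_def[symmetric]
    using bnd by (smt (verit))
qed

lemma final_arith:
  fixes lmin lmax m K S0 \<delta> \<tau> c1p \<gamma>p c2p \<Delta> L ch :: real
  assumes d0: "0 < \<delta>" and d1: "\<delta> < 1 - \<tau>" and d2: "\<delta> \<le> 1/2" and t0: "0 < \<tau>"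
    and l1: "1 - \<delta> \<le> lmin" and l2: "lmin \<le> 1 + \<delta>" and l3: "lmax \<le> 1 + \<delta>" and l4: "lmin \<le> lmax"
    and m0: "0 \<le> m" and m1: "m \<le> S0 + \<delta>"
    and key: "(1 + \<delta>) * (6 * (S0 + \<delta>) * (1 + \<delta>) / (1 - \<delta>)^2 + 2 * (S0 + 1 + 2 * \<delta>) / (1 - \<delta>))
        \<le> 3 * c1p * (1 - \<tau> / (1 - \<delta>))^2"
    and c1: "c1p > 0" and g: "\<gamma>p > 0" and c2: "c2p > 0" and D0: "0 < \<Delta>" and D1: "\<Delta> < c2p"
    and L: "L \<ge> \<gamma>p * c1p * ln (c2p / \<Delta>)" and K: "K > 0" and Ksmall: "K * (\<Delta> / c2p) powr (\<delta> * \<gamma>p) \<le> 1"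
    and ch: "ch \<ge> 1"
  shows "1 - \<tau> / lmin \<in> {0<..1 - \<tau> / 2} \<and>
    2 * K * exp (- (3 * (1 - \<tau> / lmin)\<^sup>2 * L) /
            (6 * m * lmax / lmin\<^sup>2 + 2 * (1 - \<tau> / lmin) * (m / lmin + lmax / lmin)))
    \<le> 2 * ch / c2p powr \<gamma>p * \<Delta> powr \<gamma>p"
proof -
  define \<epsilon> where "\<epsilon> = 1 - \<tau> / lmin"
  define \<epsilon>0 where "\<epsilon>0 = 1 - \<tau> / (1 - \<delta>)"
  have lpos: "lmin > 0" using l1 d2 by linarith
  have omd: "1 - \<delta> > 0" using d2 by linarith
  have e0pos: "\<epsilon>0 > 0" unfolding \<epsilon>0_def using d1 omd by (simp add: field_simps)
  have ee0: "\<epsilon>0 \<le> \<epsilon>" unfolding \<epsilon>_def \<epsilon>0_def using l1 omd t0 by (simp add: frac_le)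
  have epos: "\<epsilon> > 0" using e0pos ee0 by linarith
  have e1: "\<epsilon> \<le> 1" unfolding \<epsilon>_def using t0 lpos by simp
  have e2: "\<epsilon> \<le> 1 - \<tau> / 2"
  proof -
    have "\<tau> / 2 \<le> \<tau> / lmin" using t0 lpos l2 d2 by (intro divide_left_mono) auto
    then show ?thesis unfolding \<epsilon>_def by linarith
  qed
  define Den where "Den = 6 * m * lmax / lmin\<^sup>2 + 2 * \<epsilon> * (m / lmin + lmax / lmin)"
  define A where "A = 6 * (S0 + \<delta>) * (1 + \<delta>) / (1 - \<delta>)^2 + 2 * (S0 + 1 + 2 * \<delta>) / (1 - \<delta>)"
  have lmaxpos: "lmax > 0" using lpos l4 by linarith
  have Dpos: "Den > 0" unfolding Den_def using m0 lpos lmaxpos epos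
    by (intro add_nonneg_pos mult_pos_pos add_nonneg_pos divide_nonneg_pos divide_pos_pos) auto
  have DA: "Den \<le> A"
  proof -
    have a1: "6 * m * lmax / lmin\<^sup>2 \<le> 6 * (S0 + \<delta>) * (1 + \<delta>) / (1 - \<delta>)^2"
      using m0 m1 l3 lmaxpos lpos l1 omd
      by (intro frac_le mult_mono power_mono) auto
    have b1: "m / lmin + lmax / lmin \<le> (S0 + 1 + 2 * \<delta>) / (1 - \<delta>)"
    proof -
      have "m / lmin + lmax / lmin = (m + lmax) / lmin" by (simp add: add_divide_distrib)
      also have "\<dots> \<le> (S0 + 1 + 2 * \<delta>) / (1 - \<delta>)"
        using m0 m1 l3 lmaxpos lpos l1 omd by (intro frac_le) auto
      finally show ?thesis .
    qed
    have b2: "0 \<le> m / lmin + lmax / lmin" using m0 lpos lmaxpos by simp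
    have "2 * \<epsilon> * (m / lmin + lmax / lmin) \<le> 2 * 1 * ((S0 + 1 + 2 * \<delta>) / (1 - \<delta>))"
      using epos e1 b1 b2 by (intro mult_mono) auto
    then show ?thesis unfolding Den_def A_def using a1 by simp
  qed
  define lg where "lg = ln (c2p / \<Delta>)"
  have lpos': "lg > 0" unfolding lg_def using D0 D1 by simp
  have "3 * \<epsilon>\<^sup>2 * L \<ge> 3 * \<epsilon>0\<^sup>2 * (\<gamma>p * c1p * lg)"
    using L e0pos ee0 lpos' c1 g unfolding lg_def[symmetric]
    by (intro mult_mono power_mono mult_left_mono) (auto intro!: mult_nonneg_nonneg)
  moreover have L0: "L \<ge> 0" using L lpos' c1 g unfolding lg_def[symmetric]
    by (meson less_eq_real_def mult_pos_pos order_trans)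
  ultimately have "3 * \<epsilon>\<^sup>2 * L / Den \<ge> 3 * \<epsilon>0\<^sup>2 * (\<gamma>p * c1p * lg) / A"
    using Dpos DA e0pos lpos' c1 g L0 by (intro frac_le) auto
  moreover have "3 * \<epsilon>0\<^sup>2 * (\<gamma>p * c1p * lg) / A \<ge> (1 + \<delta>) * \<gamma>p * lg"
  proof -
    have Apos: "A > 0" using Dpos DA by linarith
    have "(1 + \<delta>) * A \<le> 3 * c1p * \<epsilon>0\<^sup>2" using key unfolding A_def \<epsilon>0_def by simp
    then have "(1 + \<delta>) * A * (\<gamma>p * lg) \<le> 3 * c1p * \<epsilon>0\<^sup>2 * (\<gamma>p * lg)"
      using g lpos' by (intro mult_right_mono) auto
    then show ?thesis using Apos by (simp add: field_simps)
  qed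
  ultimately have E: "3 * \<epsilon>\<^sup>2 * L / Den \<ge> (1 + \<delta>) * \<gamma>p * lg" by linarith
  have "exp (- (3 * \<epsilon>\<^sup>2 * L) / Den) \<le> exp (- ((1 + \<delta>) * \<gamma>p * lg))"
    using E by simp
  also have "exp (- ((1 + \<delta>) * \<gamma>p * lg)) = (\<Delta> / c2p) powr ((1 + \<delta>) * \<gamma>p)"
  proof -
    have "lg = - ln (\<Delta> / c2p)" unfolding lg_def using D0 c2 by (simp add: ln_div)
    then show ?thesis using D0 c2 by (simp add: powr_def)
  qed
  also have "\<dots> = (\<Delta> / c2p) powr \<gamma>p * (\<Delta> / c2p) powr (\<delta> * \<gamma>p)"
    by (simp add: powr_add[symmetric] algebra_simps)
  finally have ex: "exp (- (3 * \<epsilon>\<^sup>2 * L) / Den) \<le> (\<Delta> / c2p) powr \<gamma>p * (\<Delta> / c2p) powr (\<delta> * \<gamma>p)" .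
  have "2 * K * exp (- (3 * \<epsilon>\<^sup>2 * L) / Den) \<le> 2 * K * ((\<Delta> / c2p) powr \<gamma>p * (\<Delta> / c2p) powr (\<delta> * \<gamma>p))"
    using ex K by (intro mult_left_mono) auto
  also have "\<dots> = 2 * (\<Delta> / c2p) powr \<gamma>p * (K * (\<Delta> / c2p) powr (\<delta> * \<gamma>p))" by simp
  also have "\<dots> \<le> 2 * (\<Delta> / c2p) powr \<gamma>p * 1" using Ksmall by (intro mult_left_mono) auto
  also have "\<dots> \<le> 2 * (\<Delta> / c2p) powr \<gamma>p * ch" using ch by (intro mult_left_mono) auto
  also have "\<dots> = 2 * ch / c2p powr \<gamma>p * \<Delta> powr \<gamma>p" using D0 c2 by (simp add: powr_divide)
  finally have fin: "2 * K * exp (- (3 * \<epsilon>\<^sup>2 * L) / Den) \<le> 2 * ch / c2p powr \<gamma>p * \<Delta> powr \<gamma>p" .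
  show ?thesis using epos e2 fin unfolding \<epsilon>_def Den_def by simp
qed

lemma multi_idx_finite: "finite (multi_idx Q :: ('d::finite \<Rightarrow> nat) set)"
proof -
  have "multi_idx Q \<subseteq> (PiE (UNIV::'d set) (\<lambda>_. {..Q}))"
  proof
    fix j :: "'d \<Rightarrow> nat" assume "j \<in> multi_idx Q"
    then have "(\<Sum>d\<in>UNIV. j d) \<le> Q" by (simp add: multi_idx_def)
    moreover have "j d \<le> (\<Sum>d\<in>UNIV. j d)" for d by (rule member_le_sum) auto
    ultimately show "j \<in> PiE UNIV (\<lambda>_. {..Q})" by (auto simp: PiE_def extensional_def intro: order_trans)
  qed
  then show ?thesis by (rule finite_subset) (simp add: finite_PiE)
qed

lemma multi_idx_zero: "(\<lambda>_. 0) \<in> multi_idx Q"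
  by (simp add: multi_idx_def)

lemma s_tendsto:
  assumes cc: "c_cube > 0" and g1: "0 < \<gamma>_cube" and g2: "\<gamma>_cube < 1/2" and c2t: "c2t > 0" and g2t: "\<gamma>2t > 0"
  shows "((\<lambda>\<Delta>. (\<Delta> * C + sqrt \<Delta> * C * (real n * \<bar>r2_trunc c2t \<gamma>2t \<Delta>\<bar>)) / (h_cube c_cube \<gamma>_cube \<Delta> / 2)) \<longlongrightarrow> 0) (at_right 0)"
proof -
  have X: "filterlim (\<lambda>\<Delta>::real. c2t * \<Delta> powr (- \<gamma>2t) * ln (1 / \<Delta>)) at_top (at_right 0)"
    using c2t g2t by real_asymp
  then have ev1: "eventually (\<lambda>\<Delta>. c2t * \<Delta> powr (- \<gamma>2t) * ln (1 / \<Delta>) \<ge> 1) (at_right 0)"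
    by (simp add: filterlim_at_top)
  have ev2: "eventually (\<lambda>\<Delta>::real. \<Delta> > 0) (at_right 0)" by (simp add: eventually_at_right_less)
  have ev: "eventually (\<lambda>\<Delta>. (\<Delta> * C + sqrt \<Delta> * C * (real n * \<bar>r2_trunc c2t \<gamma>2t \<Delta>\<bar>)) / (h_cube c_cube \<gamma>_cube \<Delta> / 2)
     = (2 * C / c_cube) * (\<Delta> / \<Delta> powr \<gamma>_cube)
       + (2 * C * real n / c_cube) * (sqrt \<Delta> * sqrt (2 * ln (c2t * \<Delta> powr (- \<gamma>2t) * ln (1 / \<Delta>))) / \<Delta> powr \<gamma>_cube)) (at_right 0)"
    using ev1 ev2
  proof eventually_elim
    case (elim \<Delta>)
    have "r2_trunc c2t \<gamma>2t \<Delta> \<ge> 0" unfolding r2_trunc_def using elim by simp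
    then have "\<bar>r2_trunc c2t \<gamma>2t \<Delta>\<bar> = sqrt (2 * ln (c2t * \<Delta> powr (- \<gamma>2t) * ln (1 / \<Delta>)))"
      by (simp add: r2_trunc_def)
    then show ?case using cc elim by (simp add: h_cube_def field_simps)
  qed
  have l1: "((\<lambda>\<Delta>::real. \<Delta> / \<Delta> powr \<gamma>_cube) \<longlongrightarrow> 0) (at_right 0)" using g2 by real_asymp
  have l2: "((\<lambda>\<Delta>::real. sqrt \<Delta> * sqrt (2 * ln (c2t * \<Delta> powr (- \<gamma>2t) * ln (1 / \<Delta>))) / \<Delta> powr \<gamma>_cube) \<longlongrightarrow> 0) (at_right 0)"
    using g2 c2t g2t by real_asymp
  have "((\<lambda>\<Delta>. (2 * C / c_cube) * (\<Delta> / \<Delta> powr \<gamma>_cube)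
       + (2 * C * real n / c_cube) * (sqrt \<Delta> * sqrt (2 * ln (c2t * \<Delta> powr (- \<gamma>2t) * ln (1 / \<Delta>))) / \<Delta> powr \<gamma>_cube)) \<longlongrightarrow> 0) (at_right 0)"
    using tendsto_add[OF tendsto_mult_left[OF l1, of "2 * C / c_cube"] tendsto_mult_left[OF l2, of "2 * C * real n / c_cube"]]
    by (simp only: mult_zero_right add_0_right)
  then show ?thesis using tendsto_cong[OF ev] by blast
qed

lemma choose_delta:
  fixes S0 c1p \<tau> :: real
  assumes S0: "S0 \<ge> 0" and c1: "c1p > 2/3 + 8/3 * S0" and t0: "0 < \<tau>"
    and t1: "\<tau> < 1 - sqrt ((2/3 + 8/3 * S0) / c1p)"
  shows "\<exists>\<delta>. 0 < \<delta> \<and> \<delta> < 1 - \<tau> \<and> \<delta> \<le> 1/2 \<and>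
    (1 + \<delta>) * (6 * (S0 + \<delta>) * (1 + \<delta>) / (1 - \<delta>)^2 + 2 * (S0 + 1 + 2 * \<delta>) / (1 - \<delta>))
        \<le> 3 * c1p * (1 - \<tau> / (1 - \<delta>))^2"
proof -
  define cs where "cs = 2/3 + 8/3 * S0"
  have cs0: "cs > 0" unfolding cs_def using S0 by simp
  have c1p0: "c1p > 0" using c1 cs0 unfolding cs_def by linarith
  have t1': "sqrt (cs / c1p) < 1 - \<tau>" using t1 unfolding cs_def by simp
  have "cs / c1p < (1 - \<tau>)^2"
  proof -
    have "cs / c1p = (sqrt (cs / c1p))^2" using cs0 c1p0 by simp
    also have "\<dots> < (1 - \<tau>)^2" using t1' cs0 c1p0 by (intro power_strict_mono) auto
    finally show ?thesis .
  qed
  then have "cs < c1p * (1 - \<tau>)^2" using c1p0 by (simp add: field_simps)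
  then have pos: "(1 + 0) * (6 * (S0 + 0) * (1 + 0) / (1 - 0)^2 + 2 * (S0 + 1 + 2 * 0) / (1 - 0))
        < 3 * c1p * (1 - \<tau> / (1 - 0))^2" unfolding cs_def by simp
  define \<phi> where "\<phi> \<delta> = 3 * c1p * (1 - \<tau> / (1 - \<delta>))^2
     - (1 + \<delta>) * (6 * (S0 + \<delta>) * (1 + \<delta>) / (1 - \<delta>)^2 + 2 * (S0 + 1 + 2 * \<delta>) / (1 - \<delta>))" for \<delta> :: real
  have "(\<phi> \<longlongrightarrow> \<phi> 0) (at_right 0)" unfolding \<phi>_def by (intro tendsto_intros) auto
  moreover have "\<phi> 0 > 0" using pos unfolding \<phi>_def by simp
  ultimately have e1: "eventually (\<lambda>\<delta>. \<phi> \<delta> > 0) (at_right 0)" by (rule order_tendstoD)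
  have "0 \<le> sqrt (cs / c1p)" using cs0 c1p0 by simp
  then have tpos: "1 - \<tau> > 0" using t1' by linarith
  have e2: "eventually (\<lambda>\<delta>::real. \<delta> < min (1 - \<tau>) (1/2)) (at_right 0)"
    unfolding eventually_at_right_field by (intro exI[of _ "min (1 - \<tau>) (1/2)"]) (use tpos in auto)
  have e3: "eventually (\<lambda>\<delta>::real. \<delta> > 0) (at_right 0)" by (simp add: eventually_at_right_less)
  have ev: "eventually (\<lambda>\<delta>. \<phi> \<delta> > 0 \<and> \<delta> < min (1 - \<tau>) (1/2) \<and> \<delta> > 0) (at_right 0)"
    using e1 e2 e3 by eventually_elim blast
  have nb: "at_right (0::real) \<noteq> bot" by simp
  obtain \<delta> where "\<phi> \<delta> > 0 \<and> \<delta> < min (1 - \<tau>) (1/2) \<and> \<delta> > 0"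
    using eventually_happens[OF ev] nb by blast
  then show ?thesis unfolding \<phi>_def by (intro exI[of _ \<delta>]) auto
qed

theorem lemma5p4:
  fixes b :: "real^'d::finite \<Rightarrow> real^'d" and \<sigma> :: "real^'d \<Rightarrow> real^'d^'d"
    and a0 :: "real^'d" and Q :: nat
    and C c_cube \<gamma>_cube c2t \<gamma>2t \<gamma>p c1p c2p \<tau> :: real
  assumes "b \<in> borel_measurable borel" and "\<sigma> \<in> borel_measurable borel"
    and "\<forall>u. norm (b u) + onorm (\<lambda>x. \<sigma> u *v x) \<le> C"
    and "c_cube > 0" and "0 < \<gamma>_cube" and "\<gamma>_cube < 1/2"
    and "c2t > 0" and "\<gamma>2t > 0"
    and "\<gamma>p > 0" and "c2p > 0"
    and "c1p > 2/3 + 8/3 * (\<Sum>j\<in>(multi_idx Q :: ('d \<Rightarrow> nat) set). \<Prod>d\<in>UNIV. 2 * real (j d) + 1)"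
    and "0 < \<tau>"
    and "\<tau> < 1 - sqrt ((2/3 + 8/3 * (\<Sum>j\<in>(multi_idx Q :: ('d \<Rightarrow> nat) set). \<Prod>d\<in>UNIV. 2 * real (j d) + 1)) / c1p)"
  shows "\<exists>\<Delta>0>0. \<forall>\<Delta>. 0 < \<Delta> \<and> \<Delta> \<le> \<Delta>0 \<longrightarrow>
    (let h = h_cube c_cube \<gamma>_cube \<Delta>;
         r2 = r2_trunc c2t \<gamma>2t \<Delta>;
         M = Xlaw b \<sigma> a0 h r2 \<Delta>;
         J = (multi_idx Q :: ('d \<Rightarrow> nat) set);
         K = real (card J);
         R = gram M a0 h;
         lmin = lambda_min_on J R;
         lmax = lambda_max_on J R;
         m = m_sup M a0 h Q;
         L = real_of_int \<lceil>\<gamma>p * c1p * ln (c2p / \<Delta>)\<rceil>;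
         \<epsilon> = 1 - \<tau> / lmin
     in \<epsilon> \<in> {0<..1 - \<tau> / 2} \<and>
        2 * K * exp (- (3 * \<epsilon>\<^sup>2 * L) /
            (6 * m * lmax / lmin\<^sup>2 + 2 * \<epsilon> * (m / lmin + lmax / lmin)))
        \<le> 2 * real ((CARD('d) + Q) choose CARD('d)) / c2p powr \<gamma>p * \<Delta> powr \<gamma>p)"
proof -
  note bm = assms(1) and sm = assms(2) and bound = assms(3)
  define J where "J = (multi_idx Q :: ('d \<Rightarrow> nat) set)"
  define S0 where "S0 = (\<Sum>j\<in>J. \<Prod>d\<in>(UNIV::'d set). 2 * real (j d) + 1)"
  define K where "K = real (card J)"
  define Dn where "Dn = real CARD('d)"
  have Jfin: "finite J" unfolding J_def by (rule multi_idx_finite)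
  have Jne: "J \<noteq> {}" unfolding J_def using multi_idx_zero by blast
  have Kpos: "K > 0" unfolding K_def using Jfin Jne by (simp add: card_gt_0_iff)
  have Dn1: "Dn \<ge> 1" unfolding Dn_def using finite_UNIV_card_ge_0[where 'a='d] by simp
  have S00: "S0 \<ge> 0" unfolding S0_def by (intro sum_nonneg prod_nonneg) auto
  have c1: "c1p > 2/3 + 8/3 * S0" using assms(11) unfolding S0_def J_def .
  have t1: "\<tau> < 1 - sqrt ((2/3 + 8/3 * S0) / c1p)" using assms(13) unfolding S0_def J_def .
  obtain \<delta> where d0: "0 < \<delta>" and d1: "\<delta> < 1 - \<tau>" and d2: "\<delta> \<le> 1/2"
    and key: "(1 + \<delta>) * (6 * (S0 + \<delta>) * (1 + \<delta>) / (1 - \<delta>)^2 + 2 * (S0 + 1 + 2 * \<delta>) / (1 - \<delta>))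
        \<le> 3 * c1p * (1 - \<tau> / (1 - \<delta>))^2"
    using choose_delta[OF S00 c1 assms(12) t1] by blast
  define e1 where "e1 = \<delta> / K"
  have e1pos: "e1 > 0" unfolding e1_def using d0 Kpos by simp
  have fam1: "\<forall>i\<in>J \<times> J. continuous_on box2 ((\<lambda>(j, k) y. p_leg j y * p_leg k y) i)"
    by (auto intro!: continuous_intros p_leg_cont)
  have fam2: "\<forall>i\<in>{0::nat}. continuous_on box2 ((\<lambda>i y. \<Sum>j\<in>J. (p_leg j y)^2) i)"
    by (auto intro!: continuous_intros p_leg_cont)
  obtain u1 where u1: "u1 > 0" and u1c: "\<forall>i\<in>J \<times> J. \<forall>x\<in>box2. \<forall>y\<in>box2. dist y x < u1 \<longrightarrow>
      \<bar>(\<lambda>(j, k) y. p_leg j y * p_leg k y) i y - (\<lambda>(j, k) y. p_leg j y * p_leg k y) i x\<bar> < e1"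
    using unif_fam[OF _ compact_box2 fam1 e1pos] Jfin by blast
  obtain u2 where u2: "u2 > 0" and u2c: "\<forall>i\<in>{0::nat}. \<forall>x\<in>box2. \<forall>y\<in>box2. dist y x < u2 \<longrightarrow>
      \<bar>(\<lambda>i y. \<Sum>j\<in>J. (p_leg j y)^2) i y - (\<lambda>i y. \<Sum>j\<in>J. (p_leg j y)^2) i x\<bar> < \<delta>"
    using unif_fam[OF _ compact_box2 fam2 d0] by blast
  define w where "w = min (min u1 (u2 / Dn)) (1 / (2 * Dn))"
  have wpos: "w > 0" unfolding w_def using u1 u2 Dn1 by simp
  define sf where "sf \<Delta> = (\<Delta> * C + sqrt \<Delta> * C * (Dn * \<bar>r2_trunc c2t \<gamma>2t \<Delta>\<bar>)) / (h_cube c_cube \<gamma>_cube \<Delta> / 2)" for \<Delta>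
  have slim: "(sf \<longlongrightarrow> 0) (at_right 0)" unfolding sf_def Dn_def
    by (rule s_tendsto[OF assms(4,5,6,7,8)])
  have E1: "eventually (\<lambda>\<Delta>. sf \<Delta> < w) (at_right 0)" using order_tendstoD(2)[OF slim wpos] .
  have E2: "eventually (\<lambda>\<Delta>::real. \<Delta> < c2p) (at_right 0)"
    unfolding eventually_at_right_field by (intro exI[of _ c2p]) (use assms(10) in auto)
  have plim: "((\<lambda>\<Delta>::real. (\<Delta> / c2p) powr (\<delta> * \<gamma>p)) \<longlongrightarrow> 0) (at_right 0)"
    using assms(9,10) d0 by real_asymp
  have E3': "eventually (\<lambda>\<Delta>. (\<Delta> / c2p) powr (\<delta> * \<gamma>p) < 1 / K) (at_right 0)"
    using order_tendstoD(2)[OF plim] Kpos by simp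
  have E4: "eventually (\<lambda>\<Delta>::real. \<Delta> > 0) (at_right 0)" by (simp add: eventually_at_right_less)
  have "eventually (\<lambda>\<Delta>. sf \<Delta> < w \<and> \<Delta> < c2p \<and> (\<Delta> / c2p) powr (\<delta> * \<gamma>p) < 1 / K) (at_right 0)"
    using E1 E2 E3' by eventually_elim blast
  then obtain bb where bb: "bb > 0" and bbP: "\<And>\<Delta>. 0 < \<Delta> \<Longrightarrow> \<Delta> < bb \<Longrightarrow>
      sf \<Delta> < w \<and> \<Delta> < c2p \<and> (\<Delta> / c2p) powr (\<delta> * \<gamma>p) < 1 / K"
    unfolding eventually_at_right_field by auto
  show ?thesis
  proof (intro exI[of _ "bb / 2"] conjI allI impI)
    show "bb / 2 > 0" using bb by simp
    fix \<Delta> :: real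
    assume "0 < \<Delta> \<and> \<Delta> \<le> bb / 2"
    then have D0: "0 < \<Delta>" and Dbb: "\<Delta> < bb" using bb by auto
    from bbP[OF D0 Dbb] have sw: "sf \<Delta> < w" and Dc: "\<Delta> < c2p"
      and pw: "(\<Delta> / c2p) powr (\<delta> * \<gamma>p) < 1 / K" by auto
    define h where "h = h_cube c_cube \<gamma>_cube \<Delta>"
    define r where "r = r2_trunc c2t \<gamma>2t \<Delta>"
    define M where "M = Xlaw b \<sigma> a0 h r \<Delta>"
    have hpos: "h > 0" unfolding h_def h_cube_def using assms(4) D0 by simp
    define s where "s = (\<Delta> * C + sqrt \<Delta> * C * (real CARD('d) * \<bar>r\<bar>)) / (h / 2)"
    have s_eq: "s = sf \<Delta>" unfolding s_def sf_def h_def r_def Dn_def ..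
    have sw': "s < w" using sw s_eq by simp
    have s1: "s \<le> 1" using sw' Dn1 unfolding w_def by (smt (verit) divide_le_eq_1 min.absorb_iff2 min_less_iff_conj)
    have gclose: "\<bar>gram M a0 h j k - (if j = k then 1 else 0)\<bar> \<le> e1" if jk: "j \<in> J" "k \<in> J" for j k
      unfolding M_def
    proof (rule gram_close[OF bm sm bound less_imp_le[OF D0] hpos])
      show "(\<Delta> * C + sqrt \<Delta> * C * (real CARD('d) * \<bar>r\<bar>)) / (h / 2) \<le> 1" using s1 unfolding s_def .
      show "\<forall>y y'. (\<forall>d. \<bar>y $ d\<bar> \<le> 1) \<longrightarrow> norm (y' - y) \<le> (\<Delta> * C + sqrt \<Delta> * C * (real CARD('d) * \<bar>r\<bar>)) / (h / 2)
        \<longrightarrow> \<bar>p_leg j y' * p_leg k y' - p_leg j y * p_leg k y\<bar> \<le> e1"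
      proof (intro allI impI)
        fix y y' :: "real^'d"
        assume y1: "\<forall>d. \<bar>y $ d\<bar> \<le> 1" and ny: "norm (y' - y) \<le> (\<Delta> * C + sqrt \<Delta> * C * (real CARD('d) * \<bar>r\<bar>)) / (h / 2)"
        have yb: "y \<in> box2" using y1 by (auto simp: box2_def intro: order_trans)
        have y'b: "y' \<in> box2" using in_box2[OF y1] ny s1 unfolding s_def by simp
        have "dist y' y < u1" using ny sw' unfolding dist_norm s_def[symmetric] w_def by simp
        then show "\<bar>p_leg j y' * p_leg k y' - p_leg j y * p_leg k y\<bar> \<le> e1"
          using u1c jk yb y'b by fastforce
      qed
    qed
    have sym: "\<forall>j\<in>J. \<forall>k\<in>J. gram M a0 h j k = gram M a0 h k j" by (simp add: gram_def mult.commute)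
    have eig: "1 - real (card J) * e1 \<le> lambda_min_on J (gram M a0 h) \<and>
        lambda_min_on J (gram M a0 h) \<le> lambda_max_on J (gram M a0 h) \<and>
        lambda_max_on J (gram M a0 h) \<le> 1 + real (card J) * e1"
      by (rule eig_J[OF Jfin Jne sym]) (use gclose in auto)
    have Ke: "real (card J) * e1 = \<delta>" unfolding e1_def K_def[symmetric] using Kpos by simp
    have mb: "0 \<le> m_sup M a0 h Q \<and> m_sup M a0 h Q \<le> S0 + \<delta>"
      unfolding M_def S0_def J_def
    proof (rule m_bound[OF bm sm bound less_imp_le[OF D0] hpos])
      show "\<forall>y y'. (\<forall>d. \<bar>y $ d\<bar> \<le> 1) \<longrightarrow>
        norm (y' - y) \<le> real CARD('d) * ((\<Delta> * C + sqrt \<Delta> * C * (real CARD('d) * \<bar>r\<bar>)) / (h / 2)) \<longrightarrow>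
        \<bar>(\<Sum>j\<in>(multi_idx Q :: ('d \<Rightarrow> nat) set). (p_leg j y')^2) - (\<Sum>j\<in>(multi_idx Q :: ('d \<Rightarrow> nat) set). (p_leg j y)^2)\<bar> \<le> \<delta>"
      proof (intro allI impI)
        fix y y' :: "real^'d"
        assume y1: "\<forall>d. \<bar>y $ d\<bar> \<le> 1" and ny: "norm (y' - y) \<le> real CARD('d) * ((\<Delta> * C + sqrt \<Delta> * C * (real CARD('d) * \<bar>r\<bar>)) / (h / 2))"
        have ny': "norm (y' - y) \<le> Dn * s" using ny unfolding s_def Dn_def .
        have Dw: "Dn * s < Dn * w" using sw' Dn1 by simp
        have Dw1: "Dn * w \<le> 1 / 2" unfolding w_def using Dn1 by (simp add: field_simps min_def)
        have Dw2: "Dn * w \<le> u2" unfolding w_def using Dn1 by (simp add: field_simps min_def)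
        have yb: "y \<in> box2" using y1 by (auto simp: box2_def intro: order_trans)
        have y'b: "y' \<in> box2" using in_box2[OF y1] ny' Dw Dw1 by simp
        have "dist y' y < u2" using ny' Dw Dw2 unfolding dist_norm by simp
        then show "\<bar>(\<Sum>j\<in>(multi_idx Q :: ('d \<Rightarrow> nat) set). (p_leg j y')^2) - (\<Sum>j\<in>(multi_idx Q :: ('d \<Rightarrow> nat) set). (p_leg j y)^2)\<bar> \<le> \<delta>"
          using u2c yb y'b unfolding J_def by fastforce
      qed
    qed
    have Lb: "real_of_int \<lceil>\<gamma>p * c1p * ln (c2p / \<Delta>)\<rceil> \<ge> \<gamma>p * c1p * ln (c2p / \<Delta>)" by linarith
    have ch: "real ((CARD('d) + Q) choose CARD('d)) \<ge> 1"
    proof -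
      have "(CARD('d) + Q) choose CARD('d) > 0" by (simp add: zero_less_binomial_iff)
      then show ?thesis by linarith
    qed
    have Ks: "K * (\<Delta> / c2p) powr (\<delta> * \<gamma>p) \<le> 1" using pw Kpos by (simp add: field_simps)
    have c1p0: "c1p > 0" using c1 S00 by linarith
    show "let h = h_cube c_cube \<gamma>_cube \<Delta>;
         r2 = r2_trunc c2t \<gamma>2t \<Delta>;
         M = Xlaw b \<sigma> a0 h r2 \<Delta>;
         J = (multi_idx Q :: ('d \<Rightarrow> nat) set);
         K = real (card J);
         R = gram M a0 h;
         lmin = lambda_min_on J R;
         lmax = lambda_max_on J R;
         m = m_sup M a0 h Q;
         L = real_of_int \<lceil>\<gamma>p * c1p * ln (c2p / \<Delta>)\<rceil>;
         \<epsilon> = 1 - \<tau> / lmin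
     in \<epsilon> \<in> {0<..1 - \<tau> / 2} \<and>
        2 * K * exp (- (3 * \<epsilon>\<^sup>2 * L) /
            (6 * m * lmax / lmin\<^sup>2 + 2 * \<epsilon> * (m / lmin + lmax / lmin)))
        \<le> 2 * real ((CARD('d) + Q) choose CARD('d)) / c2p powr \<gamma>p * \<Delta> powr \<gamma>p"
      unfolding Let_def h_def[symmetric] r_def[symmetric] M_def[symmetric] J_def[symmetric] K_def[symmetric]
      by (rule final_arith[OF d0 d1 d2 assms(12) _ _ _ _ _ _ key c1p0 assms(9) assms(10) D0 Dc Lb Kpos Ks ch])
         (use eig Ke mb in auto)
  qed
qed

end
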